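(* Let $\mathcal G$ be a braided stability groupoid and $F\colon U\mathcal G\to\mathrm{Set}$ a functor. Then for all $p,n$ there is an isomorphism $(\Sigma^pF)_n\cong G_n\times_{G_{n-p}}F_{n-p}$. Under these isomorphisms, for a morphism $\eta=hG_{p-q}\in\mathrm{Hom}(q,p)$ (with $h\in G_p$) the corresponding map $(\Sigma^pF)_n\to(\Sigma^qF)_n$ is $[g,x]\mapsto[g(\mathrm{id}_{n-p}\oplus h),F(\mathrm{id}_{n-p}\oplus\iota_{p-q})(x)]$, and this map is independent of the choice of $h$ representing $\eta$.
   Context: Stability groupoid: a monoidal groupoid $(\mathcal G,\oplus,0)$ with objects $(\mathbb N,+,0)$, $G_n=\mathrm{Aut}(n)$, with $\oplus\colon G_m\times G_n\to G_{m+n}$ injective, $G_0$ trivial, $(G_{l+m}\times1)\cap(1\times G_{m+n})=1\times G_m\times1$ in $G_{l+m+n}$; braided: equipped with a braiding $b_{m,n}\in G_{m+n}$. $U\mathcal G$: objects $\mathbb N$, $\mathrm{Hom}(m,n)=G_n/G_{n-m}$ for $m\le n$ ($G_{n-m}\subset G_n$ via $g\mapsto g\oplus\mathrm{id}_m$), empty otherwise, composition $fG_l\circ gG_m=f(\mathrm{id}_l\oplus g)G_{l+m}$, monoidal via $f_1G_{m_1}\oplus f_2G_{m_2}=(f_1\oplus f_2)(\mathrm{id}_{m_1}\oplus b^{-1}_{n_1,m_2}\oplus\mathrm{id}_{n_2})G_{m_1+m_2}$; $0$ initial with $\iota_n\colon 0\to n$. Write $F_n=F(n)$. For an object $X$,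 $\Sigma_X$ is the left adjoint of the functor $F\mapsto F(-\oplus X)$ on functors $U\mathcal G\to\mathrm{Set}$ (left Kan extension along $-\oplus X$); concretely $(\Sigma_XF)(B)=\mathrm{colim}_{(A,\psi\colon A\oplus X\to B)}F(A)$ over the comma category $(-\oplus X\downarrow B)$. A morphism $\eta\colon X\to Y$ induces $\Sigma_YF\to\Sigma_XF$ via the functor $(-\oplus Y\downarrow B)\to(-\oplus X\downarrow B)$, $(A,\psi)\mapsto(A,\psi\circ(\mathrm{id}_A\oplus\eta))$. Write $\Sigma=\Sigma_1$, so $\Sigma^p\cong\Sigma_p$. $G_n\times_{G_{n-p}}F_{n-p}$ is the quotient of $G_n\times F_{n-p}$ by $(gh,x)\sim(g,F(h)x)$ for $h\in G_{n-p}$, where $G_{n-p}\subset G_n$ via $h\mapsto h\oplus\mathrm{id}_p$; $[g,x]$ denotes a class. *)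

theory Defs
  imports "HOL-Algebra.Group" "HOL-Algebra.Coset"
begin

text \<open>A (strict) monoidal groupoid with objects (nat,+,0) is encoded by the automorphism
groups G n (all over a common carrier type) and the monoidal product on morphisms
T m n g h = g \<oplus> h (for g in G m, h in G n), an element of G (m+n).  Group multiplication is composition:
mult (G n) f g = f \<circ> g.\<close>

definition stab_sub :: "(nat \<Rightarrow> 'g monoid) \<Rightarrow> (nat \<Rightarrow> nat \<Rightarrow> 'g \<Rightarrow> 'g \<Rightarrow> 'g) \<Rightarrow> nat \<Rightarrow> nat \<Rightarrow> 'g set" where
  "stab_sub G T n k = (\<lambda>h. T k (n - k) h (one (G (n - k)))) ` carrier (G k)"

definition braided_stability_groupoid ::
  "(nat \<Rightarrow> 'g monoid) \<Rightarrow> (nat \<Rightarrow> nat \<Rightarrow> 'g \<Rightarrow> 'g \<Rightarrow> 'g) \<Rightarrow> (nat \<Rightarrow> nat \<Rightarrow> 'g) \<Rightarrow> bool" where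
  "braided_stability_groupoid G T B \<longleftrightarrow>
     (\<forall>n. group (G n)) \<and>
     \<comment> \<open>the monoidal product is a functor G_m x G_n -> G_(m+n)\<close>
     (\<forall>m n g h. g \<in> carrier (G m) \<longrightarrow> h \<in> carrier (G n) \<longrightarrow> T m n g h \<in> carrier (G (m + n))) \<and>
     (\<forall>m n g g' h h'. g \<in> carrier (G m) \<longrightarrow> g' \<in> carrier (G m) \<longrightarrow>
         h \<in> carrier (G n) \<longrightarrow> h' \<in> carrier (G n) \<longrightarrow>
         T m n (mult (G m) g g') (mult (G n) h h') = mult (G (m + n)) (T m n g h) (T m n g' h')) \<and>
     \<comment> \<open>strict associativity and unit\<close>
     (\<forall>l m n a b c. a \<in> carrier (G l) \<longrightarrow> b \<in> carrier (G m) \<longrightarrow> c \<in> carrier (G n) \<longrightarrow>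
         T (l + m) n (T l m a b) c = T l (m + n) a (T m n b c)) \<and>
     (\<forall>n g. g \<in> carrier (G n) \<longrightarrow> T 0 n (one (G 0)) g = g \<and> T n 0 g (one (G 0)) = g) \<and>
     \<comment> \<open>stability groupoid axioms\<close>
     (\<forall>m n. inj_on (\<lambda>(g, h). T m n g h) (carrier (G m) \<times> carrier (G n))) \<and>
     carrier (G 0) = {one (G 0)} \<and>
     (\<forall>l m n.
        (\<lambda>g. T (l + m) n g (one (G n))) ` carrier (G (l + m)) \<inter>
        (\<lambda>g. T l (m + n) (one (G l)) g) ` carrier (G (m + n))
        = (\<lambda>g. T l (m + n) (one (G l)) (T m n g (one (G n)))) ` carrier (G m)) \<and>
     \<comment> \<open>braiding: b_(m,n) : m+n -> n+m, natural, hexagon identities\<close>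
     (\<forall>m n. B m n \<in> carrier (G (m + n))) \<and>
     (\<forall>m n g h. g \<in> carrier (G m) \<longrightarrow> h \<in> carrier (G n) \<longrightarrow>
         mult (G (m + n)) (B m n) (T m n g h) = mult (G (m + n)) (T n m h g) (B m n)) \<and>
     (\<forall>l m n. B l (m + n) =
         mult (G (l + m + n)) (T m (l + n) (one (G m)) (B l n)) (T (l + m) n (B l m) (one (G n)))) \<and>
     (\<forall>l m n. B (l + m) n =
         mult (G (l + m + n)) (T (l + n) m (B l n) (one (G m))) (T l (m + n) (one (G l)) (B m n)))"

section \<open>The category U G\<close>

text \<open>Hom(m,n) = G_n / G_(n-m), morphisms are left cosets.\<close>
definition UHom :: "(nat \<Rightarrow> 'g monoid) \<Rightarrow> (nat \<Rightarrow> nat \<Rightarrow> 'g \<Rightarrow> 'g \<Rightarrow> 'g) \<Rightarrow> nat \<Rightarrow> nat \<Rightarrow> 'g set set" where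
  "UHom G T m n = (if m \<le> n then {l_coset (G n) f (stab_sub G T n (n - m)) | f. f \<in> carrier (G n)} else {})"

definition urep :: "'g set \<Rightarrow> 'g" where
  "urep \<phi> = (SOME f. f \<in> \<phi>)"

text \<open>composition of psi : k -> n with phi : m -> k:
  f G_l o g G_m' = f (id_l + g) G_(l+m')\<close>
definition ucomp :: "(nat \<Rightarrow> 'g monoid) \<Rightarrow> (nat \<Rightarrow> nat \<Rightarrow> 'g \<Rightarrow> 'g \<Rightarrow> 'g) \<Rightarrow> nat \<Rightarrow> nat \<Rightarrow> nat \<Rightarrow> 'g set \<Rightarrow> 'g set \<Rightarrow> 'g set" where
  "ucomp G T n k m \<psi> \<phi> =
     l_coset (G n) (mult (G n) (urep \<psi>) (T (n - k) k (one (G (n - k))) (urep \<phi>))) (stab_sub G T n (n - m))"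

definition uid :: "(nat \<Rightarrow> 'g monoid) \<Rightarrow> (nat \<Rightarrow> nat \<Rightarrow> 'g \<Rightarrow> 'g \<Rightarrow> 'g) \<Rightarrow> nat \<Rightarrow> 'g set" where
  "uid G T n = l_coset (G n) (one (G n)) (stab_sub G T n 0)"

definition uiota :: "(nat \<Rightarrow> 'g monoid) \<Rightarrow> (nat \<Rightarrow> nat \<Rightarrow> 'g \<Rightarrow> 'g \<Rightarrow> 'g) \<Rightarrow> nat \<Rightarrow> 'g set" where
  "uiota G T n = l_coset (G n) (one (G n)) (stab_sub G T n n)"

text \<open>monoidal product of phi1 : a1 -> c1 and phi2 : a2 -> c2 (n_i = a_i, m_i = c_i - a_i):
  f1 G_m1 + f2 G_m2 = (f1 + f2)(id_m1 + b^-1_(n1,m2) + id_n2) G_(m1+m2)\<close>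
definition utens :: "(nat \<Rightarrow> 'g monoid) \<Rightarrow> (nat \<Rightarrow> nat \<Rightarrow> 'g \<Rightarrow> 'g \<Rightarrow> 'g) \<Rightarrow> (nat \<Rightarrow> nat \<Rightarrow> 'g) \<Rightarrow>
    nat \<Rightarrow> nat \<Rightarrow> nat \<Rightarrow> nat \<Rightarrow> 'g set \<Rightarrow> 'g set \<Rightarrow> 'g set" where
  "utens G T B a1 c1 a2 c2 \<phi>1 \<phi>2 =
     (let m1 = c1 - a1; m2 = c2 - a2 in
      l_coset (G (c1 + c2))
        (mult (G (c1 + c2)) (T c1 c2 (urep \<phi>1) (urep \<phi>2))
           (T m1 (a1 + m2 + a2) (one (G m1)) (T (a1 + m2) a2 (m_inv (G (a1 + m2)) (B a1 m2)) (one (G a2)))))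
        (stab_sub G T (c1 + c2) (m1 + m2)))"

definition UG_functor :: "(nat \<Rightarrow> 'g monoid) \<Rightarrow> (nat \<Rightarrow> nat \<Rightarrow> 'g \<Rightarrow> 'g \<Rightarrow> 'g) \<Rightarrow>
    (nat \<Rightarrow> 'x set) \<Rightarrow> (nat \<Rightarrow> nat \<Rightarrow> 'g set \<Rightarrow> 'x \<Rightarrow> 'x) \<Rightarrow> bool" where
  "UG_functor G T Fo Fm \<longleftrightarrow>
     (\<forall>m n \<phi> x. \<phi> \<in> UHom G T m n \<longrightarrow> x \<in> Fo m \<longrightarrow> Fm m n \<phi> x \<in> Fo n) \<and>
     (\<forall>n x. x \<in> Fo n \<longrightarrow> Fm n n (uid G T n) x = x) \<and>
     (\<forall>m k n \<phi> \<psi> x. \<phi> \<in> UHom G T m k \<longrightarrow> \<psi> \<in> UHom G T k n \<longrightarrow> x \<in> Fo m \<longrightarrow>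
        Fm m n (ucomp G T n k m \<psi> \<phi>) x = Fm k n \<psi> (Fm m k \<phi> x))"

section \<open>Sigma_X F as a colimit over the comma category (- + X | Bo)\<close>

definition Sig_tot :: "(nat \<Rightarrow> 'g monoid) \<Rightarrow> (nat \<Rightarrow> nat \<Rightarrow> 'g \<Rightarrow> 'g \<Rightarrow> 'g) \<Rightarrow> (nat \<Rightarrow> 'x set) \<Rightarrow>
    nat \<Rightarrow> nat \<Rightarrow> (nat \<times> 'g set \<times> 'x) set" where
  "Sig_tot G T Fo X Bo = {(A, \<psi>, x). \<psi> \<in> UHom G T (A + X) Bo \<and> x \<in> Fo A}"

definition Sig_rel :: "(nat \<Rightarrow> 'g monoid) \<Rightarrow> (nat \<Rightarrow> nat \<Rightarrow> 'g \<Rightarrow> 'g \<Rightarrow> 'g) \<Rightarrow> (nat \<Rightarrow> nat \<Rightarrow> 'g) \<Rightarrow>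
    (nat \<Rightarrow> 'x set) \<Rightarrow> (nat \<Rightarrow> nat \<Rightarrow> 'g set \<Rightarrow> 'x \<Rightarrow> 'x) \<Rightarrow> nat \<Rightarrow> nat \<Rightarrow>
    ((nat \<times> 'g set \<times> 'x) \<times> (nat \<times> 'g set \<times> 'x)) set" where
  "Sig_rel G T B Fo Fm X Bo =
     {((A, \<psi>, x), (A', \<psi>', x')).
        (A, \<psi>, x) \<in> Sig_tot G T Fo X Bo \<and> (A', \<psi>', x') \<in> Sig_tot G T Fo X Bo \<and>
        (\<exists>\<alpha> \<in> UHom G T A A'.
           \<psi> = ucomp G T Bo (A' + X) (A + X) \<psi>' (utens G T B A A' X X \<alpha> (uid G T X)) \<and>
           x' = Fm A A' \<alpha> x)}"

definition Sig_eq :: "(nat \<Rightarrow> 'g monoid) \<Rightarrow> (nat \<Rightarrow> nat \<Rightarrow> 'g \<Rightarrow> 'g \<Rightarrow> 'g) \<Rightarrow> (nat \<Rightarrow> nat \<Rightarrow> 'g) \<Rightarrow>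
    (nat \<Rightarrow> 'x set) \<Rightarrow> (nat \<Rightarrow> nat \<Rightarrow> 'g set \<Rightarrow> 'x \<Rightarrow> 'x) \<Rightarrow> nat \<Rightarrow> nat \<Rightarrow>
    ((nat \<times> 'g set \<times> 'x) \<times> (nat \<times> 'g set \<times> 'x)) set" where
  "Sig_eq G T B Fo Fm X Bo = (Sig_rel G T B Fo Fm X Bo \<union> (Sig_rel G T B Fo Fm X Bo)\<inverse>)\<^sup>*"

definition Sig :: "(nat \<Rightarrow> 'g monoid) \<Rightarrow> (nat \<Rightarrow> nat \<Rightarrow> 'g \<Rightarrow> 'g \<Rightarrow> 'g) \<Rightarrow> (nat \<Rightarrow> nat \<Rightarrow> 'g) \<Rightarrow>
    (nat \<Rightarrow> 'x set) \<Rightarrow> (nat \<Rightarrow> nat \<Rightarrow> 'g set \<Rightarrow> 'x \<Rightarrow> 'x) \<Rightarrow> nat \<Rightarrow> nat \<Rightarrow> (nat \<times> 'g set \<times> 'x) set set" where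
  "Sig G T B Fo Fm X Bo = Sig_tot G T Fo X Bo // Sig_eq G T B Fo Fm X Bo"

definition Sig_map :: "(nat \<Rightarrow> 'g monoid) \<Rightarrow> (nat \<Rightarrow> nat \<Rightarrow> 'g \<Rightarrow> 'g \<Rightarrow> 'g) \<Rightarrow> (nat \<Rightarrow> nat \<Rightarrow> 'g) \<Rightarrow>
    (nat \<Rightarrow> 'x set) \<Rightarrow> (nat \<Rightarrow> nat \<Rightarrow> 'g set \<Rightarrow> 'x \<Rightarrow> 'x) \<Rightarrow> nat \<Rightarrow> nat \<Rightarrow> 'g set \<Rightarrow> nat \<Rightarrow>
    (nat \<times> 'g set \<times> 'x) set \<Rightarrow> (nat \<times> 'g set \<times> 'x) set" where
  "Sig_map G T B Fo Fm X Y \<eta> Bo c =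
     (case (SOME t. t \<in> c) of (A, \<psi>, x) \<Rightarrow>
        Sig_eq G T B Fo Fm X Bo ``
          {(A, ucomp G T Bo (A + Y) (A + X) \<psi> (utens G T B A A X Y (uid G T A) \<eta>), x)})"

section \<open>The balanced product G_n x_(G_k) F_k\<close>

definition bal_rel :: "(nat \<Rightarrow> 'g monoid) \<Rightarrow> (nat \<Rightarrow> nat \<Rightarrow> 'g \<Rightarrow> 'g \<Rightarrow> 'g) \<Rightarrow>
    (nat \<Rightarrow> 'x set) \<Rightarrow> (nat \<Rightarrow> nat \<Rightarrow> 'g set \<Rightarrow> 'x \<Rightarrow> 'x) \<Rightarrow> nat \<Rightarrow> nat \<Rightarrow> (('g \<times> 'x) \<times> ('g \<times> 'x)) set" where
  "bal_rel G T Fo Fm n k =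
     {((g1, x1), (g2, x2)). g2 \<in> carrier (G n) \<and> x1 \<in> Fo k \<and>
        (\<exists>h \<in> carrier (G k). g1 = mult (G n) g2 (T k (n - k) h (one (G (n - k)))) \<and>
            x2 = Fm k k (l_coset (G k) h (stab_sub G T k 0)) x1)}"

definition bal_eq :: "(nat \<Rightarrow> 'g monoid) \<Rightarrow> (nat \<Rightarrow> nat \<Rightarrow> 'g \<Rightarrow> 'g \<Rightarrow> 'g) \<Rightarrow>
    (nat \<Rightarrow> 'x set) \<Rightarrow> (nat \<Rightarrow> nat \<Rightarrow> 'g set \<Rightarrow> 'x \<Rightarrow> 'x) \<Rightarrow> nat \<Rightarrow> nat \<Rightarrow> (('g \<times> 'x) \<times> ('g \<times> 'x)) set" where
  "bal_eq G T Fo Fm n k = (bal_rel G T Fo Fm n k \<union> (bal_rel G T Fo Fm n k)\<inverse>)\<^sup>*"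

definition Bal :: "(nat \<Rightarrow> 'g monoid) \<Rightarrow> (nat \<Rightarrow> nat \<Rightarrow> 'g \<Rightarrow> 'g \<Rightarrow> 'g) \<Rightarrow>
    (nat \<Rightarrow> 'x set) \<Rightarrow> (nat \<Rightarrow> nat \<Rightarrow> 'g set \<Rightarrow> 'x \<Rightarrow> 'x) \<Rightarrow> nat \<Rightarrow> nat \<Rightarrow> ('g \<times> 'x) set set" where
  "Bal G T Fo Fm n k = (carrier (G n) \<times> Fo k) // bal_eq G T Fo Fm n k"

definition bcls :: "(nat \<Rightarrow> 'g monoid) \<Rightarrow> (nat \<Rightarrow> nat \<Rightarrow> 'g \<Rightarrow> 'g \<Rightarrow> 'g) \<Rightarrow>
    (nat \<Rightarrow> 'x set) \<Rightarrow> (nat \<Rightarrow> nat \<Rightarrow> 'g set \<Rightarrow> 'x \<Rightarrow> 'x) \<Rightarrow> nat \<Rightarrow> nat \<Rightarrow> 'g \<Rightarrow> 'x \<Rightarrow> ('g \<times> 'x) set" where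
  "bcls G T Fo Fm n k g x = bal_eq G T Fo Fm n k `` {(g, x)}"

end

theory Submission
  imports Defs
begin


locale bsg =
  fixes G :: "nat \<Rightarrow> 'g monoid" and T :: "nat \<Rightarrow> nat \<Rightarrow> 'g \<Rightarrow> 'g \<Rightarrow> 'g" and B :: "nat \<Rightarrow> nat \<Rightarrow> 'g"
  assumes bsg: "braided_stability_groupoid G T B"
begin

abbreviation "e n \<equiv> one (G n)"
abbreviation "S n k \<equiv> stab_sub G T n k"

lemmas P = bsg[unfolded braided_stability_groupoid_def]
lemmas P1 = P[THEN conjunct1]
lemmas P2 = P[THEN conjunct2, THEN conjunct1]
lemmas P3 = P[THEN conjunct2, THEN conjunct2, THEN conjunct1]
lemmas P4 = P[THEN conjunct2, THEN conjunct2, THEN conjunct2, THEN conjunct1]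
lemmas P5 = P[THEN conjunct2, THEN conjunct2, THEN conjunct2, THEN conjunct2, THEN conjunct1]
lemmas P7 = P[THEN conjunct2, THEN conjunct2, THEN conjunct2, THEN conjunct2, THEN conjunct2, THEN conjunct2, THEN conjunct1]
lemmas P9 = P[THEN conjunct2, THEN conjunct2, THEN conjunct2, THEN conjunct2, THEN conjunct2, THEN conjunct2, THEN conjunct2, THEN conjunct2, THEN conjunct1]
lemmas P10 = P[THEN conjunct2, THEN conjunct2, THEN conjunct2, THEN conjunct2, THEN conjunct2, THEN conjunct2, THEN conjunct2, THEN conjunct2, THEN conjunct2, THEN conjunct1]
lemmas P11x = P[THEN conjunct2, THEN conjunct2, THEN conjunct2, THEN conjunct2, THEN conjunct2, THEN conjunct2, THEN conjunct2, THEN conjunct2, THEN conjunct2, THEN conjunct2, THEN conjunct1]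
lemmas P12 = P[THEN conjunct2, THEN conjunct2, THEN conjunct2, THEN conjunct2, THEN conjunct2, THEN conjunct2, THEN conjunct2, THEN conjunct2, THEN conjunct2, THEN conjunct2, THEN conjunct2]


lemma grp: "group (G n)" using P1 by blast
lemma Tc: "g \<in> carrier (G m) \<Longrightarrow> h \<in> carrier (G k) \<Longrightarrow> T m k g h \<in> carrier (G (m + k))"
  using P2 by blast
lemma Tm: "g \<in> carrier (G m) \<Longrightarrow> g' \<in> carrier (G m) \<Longrightarrow> h \<in> carrier (G k) \<Longrightarrow> h' \<in> carrier (G k) \<Longrightarrow>
   T m k (g \<otimes>\<^bsub>G m\<^esub> g') (h \<otimes>\<^bsub>G k\<^esub> h') = T m k g h \<otimes>\<^bsub>G (m + k)\<^esub> T m k g' h'"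
  using P3 by blast
lemma Ta: "a \<in> carrier (G l) \<Longrightarrow> b \<in> carrier (G m) \<Longrightarrow> c \<in> carrier (G k) \<Longrightarrow>
   T (l + m) k (T l m a b) c = T l (m + k) a (T m k b c)"
  using P4 by blast
lemma Tu0: "g \<in> carrier (G k) \<Longrightarrow> T 0 k (e 0) g = g"
  using P5 by blast
lemma Tu0': "g \<in> carrier (G k) \<Longrightarrow> T k 0 g (e 0) = g"
  using P5 by blast
lemma G0: "carrier (G 0) = {e 0}"
  using P7 by blast
lemma Bc: "B m k \<in> carrier (G (m + k))"
  using P9 by blast
lemma Bn: "g \<in> carrier (G m) \<Longrightarrow> h \<in> carrier (G k) \<Longrightarrow>
         B m k \<otimes>\<^bsub>G (m + k)\<^esub> T m k g h = T k m h g \<otimes>\<^bsub>G (m + k)\<^esub> B m k"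
  using P10 by blast
lemma H1: "B l (m + k) =
         T m (l + k) (e m) (B l k) \<otimes>\<^bsub>G (l + m + k)\<^esub> T (l + m) k (B l m) (e k)"
  using P11x by blast
lemma H2: "B (l + m) k =
         T (l + k) m (B l k) (e m) \<otimes>\<^bsub>G (l + m + k)\<^esub> T l (m + k) (e l) (B m k)"
  using P12 by blast

lemma Tee: "T m k (e m) (e k) = e (m + k)"
proof -
  interpret g1: group "G m" by (rule grp)
  interpret g2: group "G k" by (rule grp)
  interpret g3: group "G (m+k)" by (rule grp)
  have c: "T m k (e m) (e k) \<in> carrier (G (m+k))" by (simp add: Tc)
  have "T m k (e m) (e k) = T m k (e m) (e k) \<otimes>\<^bsub>G (m + k)\<^esub> T m k (e m) (e k)"
    using Tm[of "e m" m "e m" "e k" k "e k"] by simp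
  then show ?thesis using c by (metis g3.l_cancel_one' g3.r_one)
qed

lemma B0: "B l 0 = e l"
proof -
  interpret g3: group "G l" by (rule grp)
  have c: "B l 0 \<in> carrier (G l)" using Bc[of l 0] by simp
  have "B l 0 = B l 0 \<otimes>\<^bsub>G l\<^esub> B l 0"
    using H1[of l 0 0] c by (simp add: Tu0 Tu0')
  then show ?thesis using c by (metis g3.l_cancel_one' g3.r_one)
qed

lemma Tc': "g \<in> carrier (G m) \<Longrightarrow> h \<in> carrier (G k) \<Longrightarrow> c = m + k \<Longrightarrow> T m k g h \<in> carrier (G c)"
  using Tc by simp

lemma ec: "e n \<in> carrier (G n)" using group.is_monoid[OF grp] by (simp add: monoid.one_closed)

definition "R n j t = T j (n-j) t (e (n-j))"
definition "L n i g = T (n-i) i (e (n-i)) g"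

lemma R_c: "t \<in> carrier (G j) \<Longrightarrow> j \<le> n \<Longrightarrow> R n j t \<in> carrier (G n)"
  unfolding R_def by (rule Tc', auto simp: ec)
lemma L_c: "t \<in> carrier (G j) \<Longrightarrow> j \<le> n \<Longrightarrow> L n j t \<in> carrier (G n)"
  unfolding L_def by (rule Tc', auto simp: ec)
lemma R_m: "t \<in> carrier (G j) \<Longrightarrow> s \<in> carrier (G j) \<Longrightarrow> j \<le> n \<Longrightarrow>
   R n j (t \<otimes>\<^bsub>G j\<^esub> s) = R n j t \<otimes>\<^bsub>G n\<^esub> R n j s"
  unfolding R_def using Tm[of t j s "e (n-j)" "n-j" "e (n-j)"] ec
  by (simp add: group.is_monoid[OF grp] monoid.l_one)
lemma L_m: "t \<in> carrier (G j) \<Longrightarrow> s \<in> carrier (G j) \<Longrightarrow> j \<le> n \<Longrightarrow>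
   L n j (t \<otimes>\<^bsub>G j\<^esub> s) = L n j t \<otimes>\<^bsub>G n\<^esub> L n j s"
  unfolding L_def using Tm[of "e (n-j)" "n-j" "e (n-j)" t j s] ec
  by (simp add: group.is_monoid[OF grp] monoid.l_one add.commute)
lemma R_e: "j \<le> n \<Longrightarrow> R n j (e j) = e n"
  unfolding R_def using Tee[of j "n-j"] by simp
lemma L_e: "j \<le> n \<Longrightarrow> L n j (e j) = e n"
  unfolding L_def using Tee[of "n-j" j] by simp
lemma R_nn: "t \<in> carrier (G n) \<Longrightarrow> R n n t = t"
  unfolding R_def by (simp add: Tu0')
lemma L_nn: "t \<in> carrier (G n) \<Longrightarrow> L n n t = t"
  unfolding L_def by (simp add: Tu0)
lemma R_0: "t \<in> carrier (G 0) \<Longrightarrow> R n 0 t = e n"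
  unfolding R_def using G0 by (simp add: Tu0 ec)
lemma L_0: "t \<in> carrier (G 0) \<Longrightarrow> L n 0 t = e n"
  unfolding L_def using G0 by (simp add: Tu0' ec)

lemma R_split: "j \<le> m \<Longrightarrow> m + i = n \<Longrightarrow> t \<in> carrier (G j) \<Longrightarrow> R n j t = T m i (R m j t) (e i)"
proof -
  assume a: "j \<le> m" "m + i = n" "t \<in> carrier (G j)"
  have "T m i (R m j t) (e i) = T (j + (m - j)) i (T j (m-j) t (e (m-j))) (e i)"
    unfolding R_def using a by simp
  also have "\<dots> = T j (m - j + i) t (T (m-j) i (e (m-j)) (e i))"
    by (rule Ta, auto simp: a ec)
  also have "\<dots> = R n j t" unfolding R_def Tee using a
    by (metis Nat.add_diff_assoc2 add_diff_cancel_left' le_add_diff_inverse)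
  finally show ?thesis by simp
qed

lemma L_split: "i \<le> m \<Longrightarrow> k + m = n \<Longrightarrow> t \<in> carrier (G i) \<Longrightarrow> L n i t = T k m (e k) (L m i t)"
proof -
  assume a: "i \<le> m" "k + m = n" "t \<in> carrier (G i)"
  have "T k m (e k) (L m i t) = T k (m - i + i) (e k) (T (m - i) i (e (m-i)) t)"
    unfolding L_def using a by simp
  also have "\<dots> = T (k + (m - i)) i (T k (m-i) (e k) (e (m-i))) t"
    by (rule Ta[symmetric], auto simp: a ec)
  also have "\<dots> = L n i t" unfolding L_def Tee using a
    by (metis Nat.add_diff_assoc add_diff_cancel_right')
  finally show ?thesis by simp
qed

lemma R_R: "j' \<le> j \<Longrightarrow> j \<le> n \<Longrightarrow> t \<in> carrier (G j') \<Longrightarrow> R n j (R j j' t) = R n j' t"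
  using R_split[of j' j "n-j" n t] by (simp add: R_def)

lemma L_L: "j' \<le> j \<Longrightarrow> j \<le> n \<Longrightarrow> t \<in> carrier (G j') \<Longrightarrow> L n j (L j j' t) = L n j' t"
  using L_split[of j' j "n-j" n t] by (simp add: L_def)

lemma R_inv: "t \<in> carrier (G j) \<Longrightarrow> j \<le> n \<Longrightarrow> R n j (inv\<^bsub>G j\<^esub> t) = inv\<^bsub>G n\<^esub> (R n j t)"
proof -
  assume a: "t \<in> carrier (G j)" "j \<le> n"
  interpret gj: group "G j" by (rule grp)
  interpret gn: group "G n" by (rule grp)
  have "R n j (inv\<^bsub>G j\<^esub> t) \<otimes>\<^bsub>G n\<^esub> R n j t = e n"
    using a by (simp add: R_m[symmetric] R_e)
  then show ?thesis using a by (intro gn.inv_equality[symmetric]) (auto intro: R_c)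
qed
lemma L_inv: "t \<in> carrier (G j) \<Longrightarrow> j \<le> n \<Longrightarrow> L n j (inv\<^bsub>G j\<^esub> t) = inv\<^bsub>G n\<^esub> (L n j t)"
proof -
  assume a: "t \<in> carrier (G j)" "j \<le> n"
  interpret gj: group "G j" by (rule grp)
  interpret gn: group "G n" by (rule grp)
  have "L n j (inv\<^bsub>G j\<^esub> t) \<otimes>\<^bsub>G n\<^esub> L n j t = e n"
    using a by (simp add: L_m[symmetric] L_e)
  then show ?thesis using a by (intro gn.inv_equality[symmetric]) (auto intro: L_c)
qed

lemma LR_comm: "i + j \<le> n \<Longrightarrow> g \<in> carrier (G i) \<Longrightarrow> t \<in> carrier (G j) \<Longrightarrow>
   L n i g \<otimes>\<^bsub>G n\<^esub> R n j t = R n j t \<otimes>\<^bsub>G n\<^esub> L n i g"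
proof -
  assume a: "i + j \<le> n" "g \<in> carrier (G i)" "t \<in> carrier (G j)"
  interpret gi: group "G i" by (rule grp)
  interpret gm: group "G (n-i)" by (rule grp)
  have x: "R (n-i) j t \<in> carrier (G (n-i))" using a by (intro R_c) auto
  have r: "R n j t = T (n-i) i (R (n-i) j t) (e i)" using a by (intro R_split) auto
  have 1: "T (n-i) i (e (n-i) \<otimes>\<^bsub>G (n-i)\<^esub> R (n-i) j t) (g \<otimes>\<^bsub>G i\<^esub> e i) = L n i g \<otimes>\<^bsub>G n\<^esub> R n j t"
    unfolding r L_def using Tm[of "e (n-i)" "n-i" "R (n-i) j t" g i "e i"] x a ec by simp
  have 2: "T (n-i) i (R (n-i) j t \<otimes>\<^bsub>G (n-i)\<^esub> e (n-i)) (e i \<otimes>\<^bsub>G i\<^esub> g) = R n j t \<otimes>\<^bsub>G n\<^esub> L n i g"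
    unfolding r L_def using Tm[of "R (n-i) j t" "n-i" "e (n-i)" "e i" i g] x a ec by simp
  have 3: "T (n-i) i (e (n-i) \<otimes>\<^bsub>G (n-i)\<^esub> R (n-i) j t) (g \<otimes>\<^bsub>G i\<^esub> e i) = T (n-i) i (R (n-i) j t \<otimes>\<^bsub>G (n-i)\<^esub> e (n-i)) (e i \<otimes>\<^bsub>G i\<^esub> g)"
    using x a by simp
  show ?thesis using 3 unfolding 1 2 .
qed

lemma L_R: "j \<le> i \<Longrightarrow> i \<le> n \<Longrightarrow> t \<in> carrier (G j) \<Longrightarrow> L n i (R i j t) = R n (n-i+j) (L (n-i+j) j t)"
proof -
  assume a: "j \<le> i" "i \<le> n" "t \<in> carrier (G j)"
  have "L n i (R i j t) = T (n-i) (j + (i-j)) (e (n-i)) (T j (i-j) t (e (i-j)))"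
    unfolding L_def R_def using a by simp
  also have "\<dots> = T (n-i+j) (i-j) (T (n-i) j (e (n-i)) t) (e (i-j))"
    by (rule Ta[symmetric], auto simp: a ec)
  also have "\<dots> = R n (n-i+j) (L (n-i+j) j t)"
    unfolding R_def L_def using a by (simp add: diff_add_inverse2)
  finally show ?thesis .
qed


end


context bsg begin
lemma S_eq: "S n j = R n j ` carrier (G j)"
  unfolding stab_sub_def R_def by simp
lemma S_sub: "j \<le> n \<Longrightarrow> subgroup (S n j) (G n)"
proof -
  assume a: "j \<le> n"
  interpret gn: group "G n" by (rule grp)
  show ?thesis unfolding S_eq
  proof (rule gn.subgroupI)
    show "R n j ` carrier (G j) \<subseteq> carrier (G n)" using a R_c by auto
    show "R n j ` carrier (G j) \<noteq> {}" using ec by blast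
    show "inv\<^bsub>G n\<^esub> x \<in> R n j ` carrier (G j)" if xx: "x \<in> R n j ` carrier (G j)" for x
    proof -
      obtain t where t: "t \<in> carrier (G j)" "x = R n j t" using xx by blast
      have q: "inv\<^bsub>G n\<^esub> x = R n j (inv\<^bsub>G j\<^esub> t)" unfolding t(2) using R_inv[OF t(1) a] by simp
      show ?thesis unfolding q by (rule imageI, rule group.inv_closed[OF grp t(1)])
    qed
    show "x \<otimes>\<^bsub>G n\<^esub> y \<in> R n j ` carrier (G j)" if xx: "x \<in> R n j ` carrier (G j)" and yy: "y \<in> R n j ` carrier (G j)" for x y
    proof -
      obtain t where t: "t \<in> carrier (G j)" "x = R n j t" using xx by blast
      obtain u where u: "u \<in> carrier (G j)" "y = R n j u" using yy by blast
      have q: "x \<otimes>\<^bsub>G n\<^esub> y = R n j (t \<otimes>\<^bsub>G j\<^esub> u)" unfolding t(2) u(2) using R_m[OF t(1) u(1) a] by simp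
      show ?thesis unfolding q by (rule imageI, rule monoid.m_closed[OF group.is_monoid[OF grp] t(1) u(1)])
    qed
  qed
qed
lemma S_mem: "t \<in> carrier (G j) \<Longrightarrow> R n j t \<in> S n j"
  unfolding S_eq by (rule imageI)

lemma S_0: "S n 0 = {e n}"
proof -
  have "R n 0 (e 0) = e n" using R_0[of "e 0" n] ec[of 0] by blast
  then show ?thesis unfolding S_eq G0 by (simp only: image_insert image_empty)
qed

lemma S_nn: "S n n = carrier (G n)"
proof -
  have "R n n ` carrier (G n) = id ` carrier (G n)" by (rule image_cong, auto simp: R_nn)
  then show ?thesis unfolding S_eq by simp
qed

lemma S_mono: assumes a: "j' \<le> j" "j \<le> n" shows "S n j' \<subseteq> S n j"
proof
  fix x assume "x \<in> S n j'"
  then obtain t where t: "t \<in> carrier (G j')" "x = R n j' t" unfolding S_eq by blast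
  have "x = R n j (R j j' t)" using a t R_R by simp
  moreover have "R j j' t \<in> carrier (G j)" using t a by (intro R_c)
  ultimately show "x \<in> S n j" using S_mem by simp
qed

lemma L_S: assumes a: "j \<le> i" "i \<le> n" "s \<in> S i j" shows "L n i s \<in> S n (n-i+j)"
proof -
  obtain t where t: "t \<in> carrier (G j)" "s = R i j t" using a(3) unfolding S_eq by blast
  have "L n i s = R n (n-i+j) (L (n-i+j) j t)" using a t L_R by simp
  moreover have "L (n-i+j) j t \<in> carrier (G (n-i+j))" using t a by (intro L_c) auto
  ultimately show ?thesis using S_mem by simp
qed

lemma S_c: "j \<le> n \<Longrightarrow> s \<in> S n j \<Longrightarrow> s \<in> carrier (G n)"
  by (rule subgroup.mem_carrier[OF S_sub])

lemma cos_abs: "subgroup H (G n) \<Longrightarrow> a \<in> carrier (G n) \<Longrightarrow> t \<in> H \<Longrightarrow>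
   (a \<otimes>\<^bsub>G n\<^esub> t) <#\<^bsub>G n\<^esub> H = a <#\<^bsub>G n\<^esub> H"
proof -
  assume a: "subgroup H (G n)" "a \<in> carrier (G n)" "t \<in> H"
  have "a \<otimes>\<^bsub>G n\<^esub> t \<in> a <#\<^bsub>G n\<^esub> H" unfolding l_coset_def using a by blast
  from group.l_repr_independence[OF grp this a(2) a(1)] show ?thesis by simp
qed

lemma cos_self: "subgroup H (G n) \<Longrightarrow> a \<in> carrier (G n) \<Longrightarrow> a \<in> a <#\<^bsub>G n\<^esub> H"
proof -
  assume a: "subgroup H (G n)" "a \<in> carrier (G n)"
  have "a \<otimes>\<^bsub>G n\<^esub> e n \<in> a <#\<^bsub>G n\<^esub> H" unfolding l_coset_def using a subgroup.one_closed[OF a(1)] by blast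
  then show ?thesis using a(2) group.is_monoid[OF grp] monoid.r_one by metis
qed

lemma cos_rep: "subgroup H (G n) \<Longrightarrow> a \<in> carrier (G n) \<Longrightarrow> \<exists>t\<in>H. urep (a <#\<^bsub>G n\<^esub> H) = a \<otimes>\<^bsub>G n\<^esub> t"
proof -
  assume a: "subgroup H (G n)" "a \<in> carrier (G n)"
  have "a \<in> a <#\<^bsub>G n\<^esub> H" by (rule cos_self[OF a])
  then have "urep (a <#\<^bsub>G n\<^esub> H) \<in> a <#\<^bsub>G n\<^esub> H" unfolding urep_def by (rule someI)
  then show ?thesis unfolding l_coset_def by blast
qed

lemma urep_in: "subgroup H (G n) \<Longrightarrow> a \<in> carrier (G n) \<Longrightarrow> urep (a <#\<^bsub>G n\<^esub> H) \<in> a <#\<^bsub>G n\<^esub> H"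
  unfolding urep_def by (rule someI, rule cos_self)

lemma cos_mem: "subgroup H (G n) \<Longrightarrow> a \<in> carrier (G n) \<Longrightarrow> y \<in> a <#\<^bsub>G n\<^esub> H \<Longrightarrow> a <#\<^bsub>G n\<^esub> H = y <#\<^bsub>G n\<^esub> H"
  by (rule group.l_repr_independence[OF grp])

lemma cos_c: "subgroup H (G n) \<Longrightarrow> a \<in> carrier (G n) \<Longrightarrow> y \<in> a <#\<^bsub>G n\<^esub> H \<Longrightarrow> y \<in> carrier (G n)"
  by (rule group.l_coset_carrier[OF grp])

lemma urep_single: "urep {a} = a" unfolding urep_def by simp

lemma cos_S0: "a \<in> carrier (G n) \<Longrightarrow> a <#\<^bsub>G n\<^esub> S n 0 = {a}"
proof -
  assume a: "a \<in> carrier (G n)"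
  have "a \<otimes>\<^bsub>G n\<^esub> e n = a" using a group.is_monoid[OF grp] monoid.r_one by metis
  then show ?thesis unfolding S_0 l_coset_def by simp
qed

lemma UHom_iff: "\<psi> \<in> UHom G T m n \<longleftrightarrow> m \<le> n \<and> (\<exists>f\<in>carrier (G n). \<psi> = f <#\<^bsub>G n\<^esub> S n (n-m))"
  unfolding UHom_def by auto

end



lemma (in group) swap_conj:
  assumes "b \<in> carrier G" "x \<in> carrier G" "y \<in> carrier G" "b \<otimes> x = y \<otimes> b"
  shows "x \<otimes> inv b = inv b \<otimes> y"
proof -
  have "b \<otimes> (x \<otimes> inv b) = b \<otimes> x \<otimes> inv b" using assms(1-3) by (simp add: m_assoc)
  also have "\<dots> = y \<otimes> b \<otimes> inv b" using assms(4) by simp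
  also have "\<dots> = y" using assms(1-3) by (simp add: m_assoc)
  finally have 1: "y = b \<otimes> (x \<otimes> inv b)" by simp
  show ?thesis using assms(1-3) 1 by (subst inv_solve_left) auto
qed

context bsg begin

lemma nat1: assumes s: "s \<in> carrier (G r)"
  shows "L (A+r) r s \<otimes>\<^bsub>G (A+r)\<^esub> inv\<^bsub>G (A+r)\<^esub> B A r = inv\<^bsub>G (A+r)\<^esub> B A r \<otimes>\<^bsub>G (A+r)\<^esub> R (A+r) r s"
proof -
  interpret g: group "G (A+r)" by (rule grp)
  have 1: "L (A+r) r s = T A r (e A) s" unfolding L_def by simp
  have 2: "R (A+r) r s = T r A s (e A)" unfolding R_def by simp
  have "B A r \<otimes>\<^bsub>G (A+r)\<^esub> L (A+r) r s = R (A+r) r s \<otimes>\<^bsub>G (A+r)\<^esub> B A r"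
    unfolding 1 2 using Bn[of "e A" A s r] s ec by simp
  then show ?thesis using s Bc[of A r] by (intro g.swap_conj) (auto intro: L_c R_c)
qed

lemma nat2: assumes s: "s \<in> carrier (G N)"
  shows "R (N+r) N s \<otimes>\<^bsub>G (N+r)\<^esub> inv\<^bsub>G (N+r)\<^esub> B N r = inv\<^bsub>G (N+r)\<^esub> B N r \<otimes>\<^bsub>G (N+r)\<^esub> L (N+r) N s"
proof -
  interpret g: group "G (N+r)" by (rule grp)
  have 1: "L (N+r) N s = T r N (e r) s" unfolding L_def by simp
  have 2: "R (N+r) N s = T N r s (e r)" unfolding R_def by simp
  have "B N r \<otimes>\<^bsub>G (N+r)\<^esub> R (N+r) N s = L (N+r) N s \<otimes>\<^bsub>G (N+r)\<^esub> B N r"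
    unfolding 1 2 using Bn[of s N "e r" r] s ec by simp
  then show ?thesis using s Bc[of N r] by (intro g.swap_conj) (auto intro: L_c R_c)
qed

lemma ucomp_eq:
  assumes a: "k \<le> n" "m \<le> k" "f \<in> carrier (G n)" "g \<in> carrier (G k)"
  shows "ucomp G T n k m (f <#\<^bsub>G n\<^esub> S n (n-k)) (g <#\<^bsub>G k\<^esub> S k (k-m)) = (f \<otimes>\<^bsub>G n\<^esub> L n k g) <#\<^bsub>G n\<^esub> S n (n-m)"
proof -
  interpret gn: group "G n" by (rule grp)
  interpret gk: group "G k" by (rule grp)
  obtain s where s: "s \<in> S n (n-k)" "urep (f <#\<^bsub>G n\<^esub> S n (n-k)) = f \<otimes>\<^bsub>G n\<^esub> s"
    using cos_rep[OF S_sub[OF diff_le_self] a(3)] by auto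
  obtain s' where s': "s' \<in> S k (k-m)" "urep (g <#\<^bsub>G k\<^esub> S k (k-m)) = g \<otimes>\<^bsub>G k\<^esub> s'"
    using cos_rep[OF S_sub[OF diff_le_self] a(4)] by auto
  obtain s0 where s0: "s0 \<in> carrier (G (n-k))" "s = R n (n-k) s0" using s(1) unfolding S_eq by blast
  have sc: "s \<in> carrier (G n)" using S_c[OF diff_le_self s(1)] .
  have s'c: "s' \<in> carrier (G k)" using S_c[OF diff_le_self s'(1)] .
  have Lg: "L n k g \<in> carrier (G n)" using a L_c by simp
  have Ls': "L n k s' \<in> carrier (G n)" using a s'c L_c by simp
  have comm: "s \<otimes>\<^bsub>G n\<^esub> L n k g = L n k g \<otimes>\<^bsub>G n\<^esub> s"
    unfolding s0(2) using LR_comm[of k "n-k" n g s0] a s0 by simp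
  have m1: "s \<in> S n (n-m)" using s(1) S_mono[of "n-k" "n-m" n] a diff_le_mono2[OF a(2), of n] by auto
  have m2: "L n k s' \<in> S n (n-m)" using L_S[of "k-m" k n s'] a s'(1) by simp
  have HH: "subgroup (S n (n-m)) (G n)" by (rule S_sub) simp
  have "ucomp G T n k m (f <#\<^bsub>G n\<^esub> S n (n-k)) (g <#\<^bsub>G k\<^esub> S k (k-m))
      = (f \<otimes>\<^bsub>G n\<^esub> s \<otimes>\<^bsub>G n\<^esub> L n k (g \<otimes>\<^bsub>G k\<^esub> s')) <#\<^bsub>G n\<^esub> S n (n-m)"
    unfolding ucomp_def s(2) s'(2) L_def ..
  also have "f \<otimes>\<^bsub>G n\<^esub> s \<otimes>\<^bsub>G n\<^esub> L n k (g \<otimes>\<^bsub>G k\<^esub> s') = (f \<otimes>\<^bsub>G n\<^esub> L n k g) \<otimes>\<^bsub>G n\<^esub> (s \<otimes>\<^bsub>G n\<^esub> L n k s')"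
  proof -
    have c2: "s \<otimes>\<^bsub>G n\<^esub> (L n k g \<otimes>\<^bsub>G n\<^esub> L n k s') = L n k g \<otimes>\<^bsub>G n\<^esub> (s \<otimes>\<^bsub>G n\<^esub> L n k s')"
      using sc Lg Ls' by (simp add: gn.m_assoc[symmetric] comm)
    show ?thesis using L_m[of g k s' n] a s'c sc Lg Ls' c2 by (simp add: gn.m_assoc)
  qed
  also have "(f \<otimes>\<^bsub>G n\<^esub> L n k g \<otimes>\<^bsub>G n\<^esub> (s \<otimes>\<^bsub>G n\<^esub> L n k s')) <#\<^bsub>G n\<^esub> S n (n-m) = (f \<otimes>\<^bsub>G n\<^esub> L n k g) <#\<^bsub>G n\<^esub> S n (n-m)"
    by (rule cos_abs[OF HH]) (use a Lg m1 m2 HH subgroup.m_closed in auto)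
  finally show ?thesis .
qed

end


context bsg begin

lemma uid_eq: "uid G T X = {e X}"
  unfolding uid_def using cos_S0[OF ec] .

lemma urep_uid: "urep (uid G T X) = e X"
  unfolding uid_eq urep_single ..

lemma Ua: assumes a: "A \<le> A'" "a \<in> carrier (G A')"
  shows "utens G T B A A' X X (a <#\<^bsub>G A'\<^esub> S A' (A'-A)) (uid G T X) = R (A'+X) A' a <#\<^bsub>G (A'+X)\<^esub> S (A'+X) (A'-A)"
proof -
  interpret g: group "G (A'+X)" by (rule grp)
  interpret gA: group "G A" by (rule grp)
  obtain t where t: "t \<in> S A' (A'-A)" "urep (a <#\<^bsub>G A'\<^esub> S A' (A'-A)) = a \<otimes>\<^bsub>G A'\<^esub> t"
    using cos_rep[OF S_sub[OF diff_le_self] a(2)] by auto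
  obtain s0 where s0: "s0 \<in> carrier (G (A'-A))" "t = R A' (A'-A) s0" using t(1) unfolding S_eq by blast
  have tc: "t \<in> carrier (G A')" using S_c[OF diff_le_self t(1)] .
  have eq1: "A' - A + (A + X) = A' + X" using a by simp
  have 1: "utens G T B A A' X X (a <#\<^bsub>G A'\<^esub> S A' (A'-A)) (uid G T X) =
     (T A' X (a \<otimes>\<^bsub>G A'\<^esub> t) (e X) \<otimes>\<^bsub>G (A'+X)\<^esub> T (A'-A) (A+X) (e (A'-A)) (T A X (inv\<^bsub>G A\<^esub> (B A 0)) (e X))) <#\<^bsub>G (A'+X)\<^esub> S (A'+X) (A'-A)"
    unfolding utens_def Let_def urep_uid t(2) by simp
  have 2: "T (A'-A) (A+X) (e (A'-A)) (T A X (inv\<^bsub>G A\<^esub> (B A 0)) (e X)) = e (A'+X)"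
    unfolding B0 gA.inv_one Tee eq1 ..
  have 3: "T A' X (a \<otimes>\<^bsub>G A'\<^esub> t) (e X) = R (A'+X) A' a \<otimes>\<^bsub>G (A'+X)\<^esub> R (A'+X) (A'-A) s0"
  proof -
    have "T A' X (a \<otimes>\<^bsub>G A'\<^esub> t) (e X) = R (A'+X) A' (a \<otimes>\<^bsub>G A'\<^esub> t)" unfolding R_def by simp
    also have "\<dots> = R (A'+X) A' a \<otimes>\<^bsub>G (A'+X)\<^esub> R (A'+X) A' t" using R_m a tc by simp
    also have "R (A'+X) A' t = R (A'+X) (A'-A) s0" unfolding s0(2) using R_R s0 by simp
    finally show ?thesis .
  qed
  have Rc: "R (A'+X) A' a \<in> carrier (G (A'+X))" using R_c a by simp
  show ?thesis unfolding 1 2 3 using Rc R_c[OF s0(1), of "A'+X"]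
    by (simp add: cos_abs[OF S_sub] S_mem s0(1))
qed

lemma Ub: assumes a: "q \<le> p" "h \<in> carrier (G p)"
  shows "utens G T B A A q p (uid G T A) (h <#\<^bsub>G p\<^esub> S p (p-q)) =
    (L (A+p) p h \<otimes>\<^bsub>G (A+p)\<^esub> R (A+p) (A+(p-q)) (inv\<^bsub>G (A+(p-q))\<^esub> B A (p-q))) <#\<^bsub>G (A+p)\<^esub> S (A+p) (p-q)"
proof -
  interpret g: group "G (A+p)" by (rule grp)
  interpret gr: group "G (A+(p-q))" by (rule grp)
  obtain t where t: "t \<in> S p (p-q)" "urep (h <#\<^bsub>G p\<^esub> S p (p-q)) = h \<otimes>\<^bsub>G p\<^esub> t"
    using cos_rep[OF S_sub[OF diff_le_self] a(2)] by auto
  obtain s0 where s0: "s0 \<in> carrier (G (p-q))" "t = R p (p-q) s0" using t(1) unfolding S_eq by blast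
  have tc: "t \<in> carrier (G p)" using S_c[OF diff_le_self t(1)] .
  have eq1: "A + p - (A + (p - q)) = q" using a by simp
  have eq2: "A + (p - q) + q = A + p" using a by simp
  have ib: "inv\<^bsub>G (A+(p-q))\<^esub> B A (p-q) \<in> carrier (G (A+(p-q)))" using Bc by simp
  have Y: "T (A+(p-q)) q (inv\<^bsub>G (A+(p-q))\<^esub> B A (p-q)) (e q) = R (A+p) (A+(p-q)) (inv\<^bsub>G (A+(p-q))\<^esub> B A (p-q))"
    unfolding R_def eq1 ..
  have Yc: "R (A+p) (A+(p-q)) (inv\<^bsub>G (A+(p-q))\<^esub> B A (p-q)) \<in> carrier (G (A + (p - q) + q))"
    unfolding eq2 using R_c[OF ib] a by simp
  have 1: "utens G T B A A q p (uid G T A) (h <#\<^bsub>G p\<^esub> S p (p-q)) =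
     (T A p (e A) (h \<otimes>\<^bsub>G p\<^esub> t) \<otimes>\<^bsub>G (A+p)\<^esub> R (A+p) (A+(p-q)) (inv\<^bsub>G (A+(p-q))\<^esub> B A (p-q))) <#\<^bsub>G (A+p)\<^esub> S (A+p) (p-q)"
    unfolding utens_def Let_def urep_uid t(2) Y using Tu0[OF Yc] by simp
  have 2: "T A p (e A) (h \<otimes>\<^bsub>G p\<^esub> t) = L (A+p) p h \<otimes>\<^bsub>G (A+p)\<^esub> R (A+p) (A+(p-q)) (L (A+(p-q)) (p-q) s0)"
  proof -
    have "T A p (e A) (h \<otimes>\<^bsub>G p\<^esub> t) = L (A+p) p (h \<otimes>\<^bsub>G p\<^esub> t)" unfolding L_def by simp
    also have "\<dots> = L (A+p) p h \<otimes>\<^bsub>G (A+p)\<^esub> L (A+p) p t" using L_m a tc by simp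
    also have "L (A+p) p t = R (A+p) (A+(p-q)) (L (A+(p-q)) (p-q) s0)" unfolding s0(2) using L_R[of "p-q" p "A+p" s0] s0 by simp
    finally show ?thesis .
  qed
  have Ls0: "L (A+(p-q)) (p-q) s0 \<in> carrier (G (A+(p-q)))" using L_c s0 by simp
  have Lh: "L (A+p) p h \<in> carrier (G (A+p))" using L_c a by simp
  have R1: "R (A+p) (A+(p-q)) (L (A+(p-q)) (p-q) s0) \<in> carrier (G (A+p))" using R_c[OF Ls0] a by simp
  have R2: "R (A+p) (A+(p-q)) (inv\<^bsub>G (A+(p-q))\<^esub> B A (p-q)) \<in> carrier (G (A+p))" using R_c[OF ib] a by simp
  have Rs0: "R (A+(p-q)) (p-q) s0 \<in> carrier (G (A+(p-q)))" using R_c s0 by simp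
  have 3: "R (A+p) (A+(p-q)) (L (A+(p-q)) (p-q) s0) \<otimes>\<^bsub>G (A+p)\<^esub> R (A+p) (A+(p-q)) (inv\<^bsub>G (A+(p-q))\<^esub> B A (p-q))
     = R (A+p) (A+(p-q)) (inv\<^bsub>G (A+(p-q))\<^esub> B A (p-q)) \<otimes>\<^bsub>G (A+p)\<^esub> R (A+p) (p-q) s0"
  proof -
    have "R (A+p) (A+(p-q)) (L (A+(p-q)) (p-q) s0) \<otimes>\<^bsub>G (A+p)\<^esub> R (A+p) (A+(p-q)) (inv\<^bsub>G (A+(p-q))\<^esub> B A (p-q))
      = R (A+p) (A+(p-q)) (L (A+(p-q)) (p-q) s0 \<otimes>\<^bsub>G (A+(p-q))\<^esub> inv\<^bsub>G (A+(p-q))\<^esub> B A (p-q))"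
      using R_m[OF Ls0 ib] a by simp
    also have "\<dots> = R (A+p) (A+(p-q)) (inv\<^bsub>G (A+(p-q))\<^esub> B A (p-q) \<otimes>\<^bsub>G (A+(p-q))\<^esub> R (A+(p-q)) (p-q) s0)"
      unfolding nat1[OF s0(1)] ..
    also have "\<dots> = R (A+p) (A+(p-q)) (inv\<^bsub>G (A+(p-q))\<^esub> B A (p-q)) \<otimes>\<^bsub>G (A+p)\<^esub> R (A+p) (A+(p-q)) (R (A+(p-q)) (p-q) s0)"
      using R_m[OF ib Rs0] a by simp
    also have "R (A+p) (A+(p-q)) (R (A+(p-q)) (p-q) s0) = R (A+p) (p-q) s0" using R_R s0 a by simp
    finally show ?thesis .
  qed
  have Rs: "R (A+p) (p-q) s0 \<in> S (A+p) (p-q)" using S_mem[OF s0(1)] .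
  have "T A p (e A) (h \<otimes>\<^bsub>G p\<^esub> t) \<otimes>\<^bsub>G (A+p)\<^esub> R (A+p) (A+(p-q)) (inv\<^bsub>G (A+(p-q))\<^esub> B A (p-q))
     = (L (A+p) p h \<otimes>\<^bsub>G (A+p)\<^esub> R (A+p) (A+(p-q)) (inv\<^bsub>G (A+(p-q))\<^esub> B A (p-q))) \<otimes>\<^bsub>G (A+p)\<^esub> R (A+p) (p-q) s0"
    unfolding 2 using Lh R1 R2 3 R_c[OF s0(1), of "A+p"] a by (simp add: g.m_assoc)
  then show ?thesis unfolding 1 using Lh R2 Rs a
    by (simp add: cos_abs[OF S_sub])
qed

lemma Uc: "utens G T B N N 0 r (uid G T N) (uiota G T r) = inv\<^bsub>G (N+r)\<^esub> B N r <#\<^bsub>G (N+r)\<^esub> S (N+r) r"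
proof -
  interpret g: group "G (N+r)" by (rule grp)
  define u where "u = urep (uiota G T r)"
  have uc: "u \<in> carrier (G r)" unfolding u_def uiota_def
    using cos_c[OF S_sub[OF order_refl] ec urep_in[OF S_sub[OF order_refl] ec]] by simp
  have ib: "inv\<^bsub>G (N+r)\<^esub> B N r \<in> carrier (G (N+r))" using Bc by simp
  have 1: "utens G T B N N 0 r (uid G T N) (uiota G T r) =
     (L (N+r) r u \<otimes>\<^bsub>G (N+r)\<^esub> inv\<^bsub>G (N+r)\<^esub> B N r) <#\<^bsub>G (N+r)\<^esub> S (N+r) r"
    unfolding utens_def Let_def urep_uid u_def[symmetric] L_def using Tu0 Tu0' ib by simp
  have Ru: "R (N+r) r u \<in> S (N+r) r" using S_mem[OF uc] .
  show ?thesis unfolding 1 nat1[OF uc] using ib Ru by (simp add: cos_abs[OF S_sub])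
qed

end



lemma symcl_sym: "(a,b) \<in> (r \<union> r\<inverse>)\<^sup>* \<Longrightarrow> (b,a) \<in> (r \<union> r\<inverse>)\<^sup>*"
proof -
  assume "(a,b) \<in> (r \<union> r\<inverse>)\<^sup>*"
  then have "(b,a) \<in> ((r \<union> r\<inverse>)\<^sup>*)\<inverse>" by simp
  also have "((r \<union> r\<inverse>)\<^sup>*)\<inverse> = (r \<union> r\<inverse>)\<^sup>*" by (simp add: rtrancl_converse[symmetric] converse_Un sup_commute)
  finally show ?thesis .
qed

lemma symcl_img: "(a,b) \<in> (r \<union> r\<inverse>)\<^sup>* \<Longrightarrow> (r \<union> r\<inverse>)\<^sup>* `` {a} = (r \<union> r\<inverse>)\<^sup>* `` {b}"
proof -
  assume ab: "(a,b) \<in> (r \<union> r\<inverse>)\<^sup>*"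
  have ba: "(b,a) \<in> (r \<union> r\<inverse>)\<^sup>*" using symcl_sym[OF ab] .
  show ?thesis
  proof
    show "(r \<union> r\<inverse>)\<^sup>* `` {a} \<subseteq> (r \<union> r\<inverse>)\<^sup>* `` {b}" using ba by (auto intro: rtrancl_trans)
    show "(r \<union> r\<inverse>)\<^sup>* `` {b} \<subseteq> (r \<union> r\<inverse>)\<^sup>* `` {a}" using ab by (auto intro: rtrancl_trans)
  qed
qed

locale bsgF = bsg G T B for G :: "nat \<Rightarrow> 'g monoid" and T and B +
  fixes Fo :: "nat \<Rightarrow> 'x set" and Fm :: "nat \<Rightarrow> nat \<Rightarrow> 'g set \<Rightarrow> 'x \<Rightarrow> 'x"
  assumes Ffun: "UG_functor G T Fo Fm"
begin

lemma F_cl: "\<phi> \<in> UHom G T m n \<Longrightarrow> x \<in> Fo m \<Longrightarrow> Fm m n \<phi> x \<in> Fo n"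
  using Ffun unfolding UG_functor_def by blast
lemma F_id: "x \<in> Fo n \<Longrightarrow> Fm n n (uid G T n) x = x"
  using Ffun unfolding UG_functor_def by blast
lemma F_comp: "\<phi> \<in> UHom G T m k \<Longrightarrow> \<psi> \<in> UHom G T k n \<Longrightarrow> x \<in> Fo m \<Longrightarrow>
        Fm m n (ucomp G T n k m \<psi> \<phi>) x = Fm k n \<psi> (Fm m k \<phi> x)"
  using Ffun unfolding UG_functor_def by blast

lemma UHom_I: "m \<le> n \<Longrightarrow> f \<in> carrier (G n) \<Longrightarrow> f <#\<^bsub>G n\<^esub> S n (n-m) \<in> UHom G T m n"
  unfolding UHom_iff by blast

lemma F_comp_eq: assumes a: "k \<le> n" "m \<le> k" "f \<in> carrier (G n)" "g \<in> carrier (G k)" "x \<in> Fo m"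
  shows "Fm k n (f <#\<^bsub>G n\<^esub> S n (n-k)) (Fm m k (g <#\<^bsub>G k\<^esub> S k (k-m)) x) = Fm m n ((f \<otimes>\<^bsub>G n\<^esub> L n k g) <#\<^bsub>G n\<^esub> S n (n-m)) x"
  using F_comp[OF UHom_I[OF a(2) a(4)] UHom_I[OF a(1) a(3)] a(5)] ucomp_eq[OF a(1-4)] by simp

definition "iota A N = e N <#\<^bsub>G N\<^esub> S N (N - A)"

lemma iota_U: "A \<le> N \<Longrightarrow> iota A N \<in> UHom G T A N"
  unfolding iota_def by (rule UHom_I, simp, rule ec)

definition "phi p n t = (case t of (A, \<psi>, x) \<Rightarrow> bcls G T Fo Fm n (n-p) (urep \<psi>) (Fm A (n-p) (iota A (n-p)) x))"

lemma bal_step: assumes "g \<in> carrier (G n)" "x \<in> Fo k" "h \<in> carrier (G k)"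
  shows "bcls G T Fo Fm n k (g \<otimes>\<^bsub>G n\<^esub> R n k h) x = bcls G T Fo Fm n k g (Fm k k (h <#\<^bsub>G k\<^esub> S k 0) x)"
proof -
  have "((g \<otimes>\<^bsub>G n\<^esub> R n k h, x), (g, Fm k k (h <#\<^bsub>G k\<^esub> S k 0) x)) \<in> bal_rel G T Fo Fm n k"
    unfolding bal_rel_def R_def using assms by blast
  then have "((g \<otimes>\<^bsub>G n\<^esub> R n k h, x), (g, Fm k k (h <#\<^bsub>G k\<^esub> S k 0) x)) \<in> bal_eq G T Fo Fm n k"
    unfolding bal_eq_def by blast
  then show ?thesis unfolding bcls_def bal_eq_def by (rule symcl_img)
qed

lemma phi_shift: assumes a: "f \<in> carrier (G n)" "t \<in> S n (n-(A+p))" "A+p \<le> n" "x \<in> Fo A"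
  shows "bcls G T Fo Fm n (n-p) (f \<otimes>\<^bsub>G n\<^esub> t) (Fm A (n-p) (iota A (n-p)) x) = bcls G T Fo Fm n (n-p) f (Fm A (n-p) (iota A (n-p)) x)"
proof -
  interpret g: group "G (n-p)" by (rule grp)
  obtain s0 where s0: "s0 \<in> carrier (G (n-(A+p)))" "t = R n (n-(A+p)) s0" using a(2) unfolding S_eq by blast
  define k where "k = R (n-p) (n-(A+p)) s0"
  have kc: "k \<in> carrier (G (n-p))" unfolding k_def using R_c s0 by simp
  have tk: "t = R n (n-p) k" unfolding k_def s0(2) using R_R s0 by simp
  have y: "Fm A (n-p) (iota A (n-p)) x \<in> Fo (n-p)" using F_cl[OF iota_U a(4)] a by simp
  have eq: "n - p - (n - p) = 0" "n - p - A = n - (A+p)" by auto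
  have "Fm (n-p) (n-p) (k <#\<^bsub>G (n-p)\<^esub> S (n-p) 0) (Fm A (n-p) (iota A (n-p)) x)
      = Fm A (n-p) ((k \<otimes>\<^bsub>G (n-p)\<^esub> L (n-p) (n-p) (e (n-p))) <#\<^bsub>G (n-p)\<^esub> S (n-p) (n-p-A)) x"
    using F_comp_eq[of "n-p" "n-p" A k "e (n-p)" x] kc ec a unfolding iota_def eq by simp
  also have "(k \<otimes>\<^bsub>G (n-p)\<^esub> L (n-p) (n-p) (e (n-p))) <#\<^bsub>G (n-p)\<^esub> S (n-p) (n-p-A) = iota A (n-p)"
  proof -
    have km: "k \<in> S (n-p) (n-p-A)" unfolding k_def eq by (rule S_mem[OF s0(1)])
    have "(k \<otimes>\<^bsub>G (n-p)\<^esub> L (n-p) (n-p) (e (n-p))) = e (n-p) \<otimes>\<^bsub>G (n-p)\<^esub> k" using kc ec L_nn by simp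
    then show ?thesis unfolding iota_def using cos_abs[OF S_sub ec km] by simp
  qed
  finally have 1: "Fm (n-p) (n-p) (k <#\<^bsub>G (n-p)\<^esub> S (n-p) 0) (Fm A (n-p) (iota A (n-p)) x) = Fm A (n-p) (iota A (n-p)) x" .
  show ?thesis unfolding tk bal_step[OF a(1) y kc] 1 ..
qed

end


context bsgF begin

lemma phi_any: assumes t: "(A,\<psi>,x) \<in> Sig_tot G T Fo p n" and f: "f \<in> \<psi>"
  shows "phi p n (A,\<psi>,x) = bcls G T Fo Fm n (n-p) f (Fm A (n-p) (iota A (n-p)) x)"
proof -
  have U: "\<psi> \<in> UHom G T (A+p) n" and x: "x \<in> Fo A" using t unfolding Sig_tot_def by auto
  obtain f0 where f0: "A+p \<le> n" "f0 \<in> carrier (G n)" "\<psi> = f0 <#\<^bsub>G n\<^esub> S n (n-(A+p))" using U unfolding UHom_iff by blast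
  have H: "subgroup (S n (n-(A+p))) (G n)" by (rule S_sub, simp)
  have fc: "f \<in> carrier (G n)" using cos_c[OF H f0(2)] f f0(3) by simp
  have psi: "\<psi> = f <#\<^bsub>G n\<^esub> S n (n-(A+p))" using cos_mem[OF H f0(2)] f f0(3) by simp
  have "urep \<psi> \<in> f <#\<^bsub>G n\<^esub> S n (n-(A+p))" unfolding psi by (rule urep_in[OF H fc])
  then obtain t where tt: "t \<in> S n (n-(A+p))" "urep \<psi> = f \<otimes>\<^bsub>G n\<^esub> t" unfolding l_coset_def by blast
  show ?thesis unfolding phi_def using phi_shift[OF fc tt(1) f0(1) x] tt(2) by simp
qed

lemma phi_rel: assumes r: "(t, t') \<in> Sig_rel G T B Fo Fm p n"
  shows "phi p n t = phi p n t'"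
proof -
  obtain A \<psi> x where tt: "t = (A,\<psi>,x)" by (cases t) auto
  obtain A' \<psi>' x' where tt': "t' = (A',\<psi>',x')" by (cases t') auto
  have r': "((A,\<psi>,x),(A',\<psi>',x')) \<in> Sig_rel G T B Fo Fm p n" using r tt tt' by simp
  then have s1: "(A,\<psi>,x) \<in> Sig_tot G T Fo p n" and s2: "(A',\<psi>',x') \<in> Sig_tot G T Fo p n"
    and "\<exists>\<alpha> \<in> UHom G T A A'. \<psi> = ucomp G T n (A' + p) (A + p) \<psi>' (utens G T B A A' p p \<alpha> (uid G T p)) \<and> x' = Fm A A' \<alpha> x"
    unfolding Sig_rel_def by auto
  then obtain \<alpha> where al: "\<alpha> \<in> UHom G T A A'" "\<psi> = ucomp G T n (A' + p) (A + p) \<psi>' (utens G T B A A' p p \<alpha> (uid G T p))"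
     "x' = Fm A A' \<alpha> x" by blast
  obtain a where a: "A \<le> A'" "a \<in> carrier (G A')" "\<alpha> = a <#\<^bsub>G A'\<^esub> S A' (A'-A)" using al(1) unfolding UHom_iff by blast
  have U': "\<psi>' \<in> UHom G T (A'+p) n" and x: "x \<in> Fo A" using s1 s2 unfolding Sig_tot_def by auto
  obtain f' where f': "A'+p \<le> n" "f' \<in> carrier (G n)" "\<psi>' = f' <#\<^bsub>G n\<^esub> S n (n-(A'+p))" using U' unfolding UHom_iff by blast
  have Ra: "R (A'+p) A' a \<in> carrier (G (A'+p))" using R_c a by simp
  have eq: "A'+p-(A+p) = A'-A" by simp
  have psi: "\<psi> = (f' \<otimes>\<^bsub>G n\<^esub> L n (A'+p) (R (A'+p) A' a)) <#\<^bsub>G n\<^esub> S n (n-(A+p))"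
    unfolding al(2) a(3) Ua[OF a(1,2)] f'(3) using ucomp_eq[of "A'+p" n "A+p" f' "R (A'+p) A' a"] f' Ra a eq by simp
  define k where "k = L (n-p) A' a"
  have kc: "k \<in> carrier (G (n-p))" unfolding k_def using L_c a f' by simp
  have eq2: "n - (A'+p) + A' = n - p" using f' by simp
  have Lk: "L n (A'+p) (R (A'+p) A' a) = R n (n-p) k"
    unfolding k_def using L_R[of A' "A'+p" n a] a f' eq2 by simp
  have fL: "f' \<otimes>\<^bsub>G n\<^esub> R n (n-p) k \<in> \<psi>" unfolding psi Lk
    by (rule cos_self[OF S_sub], simp, rule monoid.m_closed[OF group.is_monoid[OF grp] f'(2) R_c[OF kc]], simp)
  have f'in: "f' \<in> \<psi>'" unfolding f'(3) by (rule cos_self[OF S_sub], simp, rule f'(2))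
  have 1: "phi p n t = bcls G T Fo Fm n (n-p) (f' \<otimes>\<^bsub>G n\<^esub> R n (n-p) k) (Fm A (n-p) (iota A (n-p)) x)"
    unfolding tt by (rule phi_any[OF s1 fL])
  have 2: "phi p n t' = bcls G T Fo Fm n (n-p) f' (Fm A' (n-p) (iota A' (n-p)) x')"
    unfolding tt' by (rule phi_any[OF s2 f'in])
  have y: "Fm A (n-p) (iota A (n-p)) x \<in> Fo (n-p)" using F_cl[OF iota_U x] a f' by simp
  have eq3: "n - p - (n - p) = 0" by simp
  have "Fm (n-p) (n-p) (k <#\<^bsub>G (n-p)\<^esub> S (n-p) 0) (Fm A (n-p) (iota A (n-p)) x)
      = Fm A (n-p) ((k \<otimes>\<^bsub>G (n-p)\<^esub> L (n-p) (n-p) (e (n-p))) <#\<^bsub>G (n-p)\<^esub> S (n-p) (n-p-A)) x"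
    using F_comp_eq[of "n-p" "n-p" A k "e (n-p)" x] kc ec a f' x unfolding iota_def eq3 by simp
  also have "\<dots> = Fm A (n-p) (k <#\<^bsub>G (n-p)\<^esub> S (n-p) (n-p-A)) x" using kc L_nn ec
    by (simp add: monoid.r_one[OF group.is_monoid[OF grp]])
  also have "\<dots> = Fm A' (n-p) (iota A' (n-p)) x'"
  proof -
    have "Fm A' (n-p) (iota A' (n-p)) x' = Fm A (n-p) ((e (n-p) \<otimes>\<^bsub>G (n-p)\<^esub> L (n-p) A' a) <#\<^bsub>G (n-p)\<^esub> S (n-p) (n-p-A)) x"
      unfolding iota_def al(3) a(3) using F_comp_eq[of A' "n-p" A "e (n-p)" a x] a f' ec x by simp
    also have "e (n-p) \<otimes>\<^bsub>G (n-p)\<^esub> L (n-p) A' a = k" unfolding k_def using kc[unfolded k_def]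
      by (simp add: monoid.l_one[OF group.is_monoid[OF grp]])
    finally show ?thesis by simp
  qed
  finally have 3: "Fm (n-p) (n-p) (k <#\<^bsub>G (n-p)\<^esub> S (n-p) 0) (Fm A (n-p) (iota A (n-p)) x) = Fm A' (n-p) (iota A' (n-p)) x'" .
  show ?thesis unfolding 1 2 bal_step[OF f'(2) y kc] 3 ..
qed

lemma phi_eq: assumes "(t, t') \<in> Sig_eq G T B Fo Fm p n" shows "phi p n t = phi p n t'"
  using assms unfolding Sig_eq_def
proof (induction rule: rtrancl_induct)
  case base then show ?case by simp
next
  case (step b c)
  then show ?case using phi_rel[of b c] phi_rel[of c b] by auto
qed

end


context bsgF begin

definition "Phi p n c = phi p n (SOME t. t \<in> c)"
definition "norm p n g x = (n - p, g <#\<^bsub>G n\<^esub> S n 0, x)"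

lemma urep_U: assumes "\<psi> \<in> UHom G T m n" shows "urep \<psi> \<in> \<psi>" "urep \<psi> \<in> carrier (G n)"
proof -
  obtain f where f: "m \<le> n" "f \<in> carrier (G n)" "\<psi> = f <#\<^bsub>G n\<^esub> S n (n-m)" using assms unfolding UHom_iff by blast
  have H: "subgroup (S n (n-m)) (G n)" by (rule S_sub, simp)
  show 1: "urep \<psi> \<in> \<psi>" unfolding f(3) by (rule urep_in[OF H f(2)])
  show "urep \<psi> \<in> carrier (G n)" using cos_c[OF H f(2)] 1 f(3) by simp
qed

lemma Sig_eq_tot: assumes "(a,b) \<in> Sig_eq G T B Fo Fm p n" "a \<in> Sig_tot G T Fo p n" shows "b \<in> Sig_tot G T Fo p n"
  using assms unfolding Sig_eq_def
proof (induction rule: rtrancl_induct)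
  case base then show ?case by simp
next
  case (step b c) then show ?case unfolding Sig_rel_def by auto
qed

lemma sig_img: "(a,b) \<in> Sig_eq G T B Fo Fm p n \<Longrightarrow> Sig_eq G T B Fo Fm p n `` {a} = Sig_eq G T B Fo Fm p n `` {b}"
  unfolding Sig_eq_def by (rule symcl_img)

lemma bal_img: "(a,b) \<in> bal_eq G T Fo Fm n k \<Longrightarrow> bcls G T Fo Fm n k (fst a) (snd a) = bcls G T Fo Fm n k (fst b) (snd b)"
  unfolding bcls_def bal_eq_def using symcl_img by (metis prod.collapse)

lemma Phi_cls: "Phi p n (Sig_eq G T B Fo Fm p n `` {t0}) = phi p n t0"
proof -
  have "t0 \<in> Sig_eq G T B Fo Fm p n `` {t0}" unfolding Sig_eq_def by simp
  then have "(SOME t. t \<in> Sig_eq G T B Fo Fm p n `` {t0}) \<in> Sig_eq G T B Fo Fm p n `` {t0}" by (rule someI)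
  then have "(t0, SOME t. t \<in> Sig_eq G T B Fo Fm p n `` {t0}) \<in> Sig_eq G T B Fo Fm p n" by simp
  then show ?thesis unfolding Phi_def using phi_eq by metis
qed

lemma norm_tot: assumes "p \<le> n" "g \<in> carrier (G n)" "x \<in> Fo (n-p)" shows "norm p n g x \<in> Sig_tot G T Fo p n"
proof -
  have "g <#\<^bsub>G n\<^esub> S n (n - (n-p+p)) \<in> UHom G T (n-p+p) n" by (rule UHom_I, use assms in simp_all)
  then show ?thesis unfolding norm_def Sig_tot_def using assms by simp
qed

lemma iota_nn: "iota N N = uid G T N" unfolding iota_def uid_def by simp

lemma phi_norm: assumes "p \<le> n" "g \<in> carrier (G n)" "x \<in> Fo (n-p)" shows "phi p n (norm p n g x) = bcls G T Fo Fm n (n-p) g x"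
  unfolding norm_def phi_def using F_id[OF assms(3)] by (simp add: cos_S0[OF assms(2)] urep_single iota_nn)

lemma to_norm: assumes t: "(A,\<psi>,x) \<in> Sig_tot G T Fo p n" and f: "f \<in> \<psi>" and p: "p \<le> n"
  shows "((A,\<psi>,x), norm p n f (Fm A (n-p) (iota A (n-p)) x)) \<in> Sig_rel G T B Fo Fm p n"
proof -
  have U: "\<psi> \<in> UHom G T (A+p) n" and x: "x \<in> Fo A" using t unfolding Sig_tot_def by auto
  obtain f0 where f0: "A+p \<le> n" "f0 \<in> carrier (G n)" "\<psi> = f0 <#\<^bsub>G n\<^esub> S n (n-(A+p))" using U unfolding UHom_iff by blast
  have H: "subgroup (S n (n-(A+p))) (G n)" by (rule S_sub, simp)
  have fc: "f \<in> carrier (G n)" using cos_c[OF H f0(2)] f f0(3) by simp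
  have psi: "\<psi> = f <#\<^bsub>G n\<^esub> S n (n-(A+p))" using cos_mem[OF H f0(2)] f f0(3) by simp
  have y: "Fm A (n-p) (iota A (n-p)) x \<in> Fo (n-p)" using F_cl[OF iota_U x] f0 by simp
  have nt: "norm p n f (Fm A (n-p) (iota A (n-p)) x) \<in> Sig_tot G T Fo p n" by (rule norm_tot[OF p fc y])
  have eq: "n - p - A = n - (A+p)" "n - p + p = n" "n - n = 0" using p by auto
  have ut: "utens G T B A (n-p) p p (iota A (n-p)) (uid G T p) = e n <#\<^bsub>G n\<^esub> S n (n - (A+p))"
    unfolding iota_def using Ua[of A "n-p" "e (n-p)" p] f0 ec R_e[of "n-p" n] eq by simp
  have "ucomp G T n (n - p + p) (A + p) (f <#\<^bsub>G n\<^esub> S n 0) (utens G T B A (n-p) p p (iota A (n-p)) (uid G T p))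
      = (f \<otimes>\<^bsub>G n\<^esub> L n n (e n)) <#\<^bsub>G n\<^esub> S n (n-(A+p))"
    unfolding ut eq using ucomp_eq[of n n "A+p" f "e n"] f0 fc ec by simp
  also have "\<dots> = \<psi>" unfolding psi using L_nn[OF ec] fc by (simp add: monoid.r_one[OF group.is_monoid[OF grp]])
  finally have "\<psi> = ucomp G T n (n - p + p) (A + p) (f <#\<^bsub>G n\<^esub> S n 0) (utens G T B A (n-p) p p (iota A (n-p)) (uid G T p))" by simp
  then show ?thesis using t nt iota_U[of A "n-p"] f0 unfolding Sig_rel_def norm_def by auto
qed

end


context bsgF begin

definition "normp p n = (\<lambda>(g,x). norm p n g x)"

lemma bal_to_sig: assumes r: "(a, b) \<in> bal_rel G T Fo Fm n (n-p)" and p: "p \<le> n"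
  shows "(normp p n a, normp p n b) \<in> Sig_rel G T B Fo Fm p n"
proof -
  obtain g1 x1 where a: "a = (g1,x1)" by (cases a) auto
  obtain g2 x2 where b: "b = (g2,x2)" by (cases b) auto
  have "g2 \<in> carrier (G n)" "x1 \<in> Fo (n-p)" and "\<exists>h \<in> carrier (G (n-p)). g1 = g2 \<otimes>\<^bsub>G n\<^esub> (T (n-p) (n - (n-p)) h (e (n - (n-p)))) \<and>
            x2 = Fm (n-p) (n-p) (h <#\<^bsub>G (n-p)\<^esub> S (n-p) 0) x1"
    using r unfolding a b bal_rel_def by auto
  then obtain h where h: "g2 \<in> carrier (G n)" "x1 \<in> Fo (n-p)" "h \<in> carrier (G (n-p))"
    "g1 = g2 \<otimes>\<^bsub>G n\<^esub> R n (n-p) h" "x2 = Fm (n-p) (n-p) (h <#\<^bsub>G (n-p)\<^esub> S (n-p) 0) x1"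
    unfolding R_def by blast
  have Rh: "R n (n-p) h \<in> carrier (G n)" using R_c h by simp
  have g1c: "g1 \<in> carrier (G n)" unfolding h(4) by (rule monoid.m_closed[OF group.is_monoid[OF grp] h(1) Rh])
  have eq: "n - p - (n - p) = 0" "n - p + p = n" "n - n = 0" using p by auto
  have hU: "h <#\<^bsub>G (n-p)\<^esub> S (n-p) 0 \<in> UHom G T (n-p) (n-p)" using UHom_I[of "n-p" "n-p" h] h eq by simp
  have x2: "x2 \<in> Fo (n-p)" unfolding h(5) by (rule F_cl[OF hU h(2)])
  have t1: "norm p n g1 x1 \<in> Sig_tot G T Fo p n" by (rule norm_tot[OF p g1c h(2)])
  have t2: "norm p n g2 x2 \<in> Sig_tot G T Fo p n" by (rule norm_tot[OF p h(1) x2])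
  have ut: "utens G T B (n-p) (n-p) p p (h <#\<^bsub>G (n-p)\<^esub> S (n-p) 0) (uid G T p) = R n (n-p) h <#\<^bsub>G n\<^esub> S n 0"
    using Ua[of "n-p" "n-p" h p] h eq by simp
  have uc: "ucomp G T n (n - p + p) (n - p + p) (g2 <#\<^bsub>G n\<^esub> S n 0) (utens G T B (n-p) (n-p) p p (h <#\<^bsub>G (n-p)\<^esub> S (n-p) 0) (uid G T p))
     = g1 <#\<^bsub>G n\<^esub> S n 0"
    unfolding ut eq h(4) using ucomp_eq[of n n n g2 "R n (n-p) h"] h Rh L_nn[OF Rh] eq by simp
  have ex: "\<exists>\<alpha>\<in>UHom G T (n - p) (n - p). g1 <#\<^bsub>G n\<^esub> S n 0 =
     ucomp G T n (n - p + p) (n - p + p) (g2 <#\<^bsub>G n\<^esub> S n 0) (utens G T B (n - p) (n - p) p p \<alpha> (uid G T p)) \<and>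
     x2 = Fm (n - p) (n - p) \<alpha> x1"
    using hU uc h(5) by blast
  show ?thesis using t1 t2 ex unfolding a b normp_def Sig_rel_def norm_def by simp
qed

lemma bal_eq_to_sig: assumes r: "(a, b) \<in> bal_eq G T Fo Fm n (n-p)" and p: "p \<le> n"
  shows "(normp p n a, normp p n b) \<in> Sig_eq G T B Fo Fm p n"
  using r unfolding bal_eq_def
proof (induction rule: rtrancl_induct)
  case base then show ?case unfolding Sig_eq_def by simp
next
  case (step b c)
  then have "(normp p n b, normp p n c) \<in> Sig_rel G T B Fo Fm p n \<union> (Sig_rel G T B Fo Fm p n)\<inverse>"
    using bal_to_sig[OF _ p, of b c] bal_to_sig[OF _ p, of c b] by auto
  then show ?case using step.IH unfolding Sig_eq_def by (rule rtrancl_into_rtrancl[rotated])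
qed

lemma Phi_bij: assumes p: "p \<le> n" shows "bij_betw (Phi p n) (Sig G T B Fo Fm p n) (Bal G T Fo Fm n (n - p))"
proof -
  define E where "E = Sig_eq G T B Fo Fm p n"
  have cls: "\<exists>f y. c = E `` {norm p n f y} \<and> f \<in> carrier (G n) \<and> y \<in> Fo (n-p) \<and> Phi p n c = bcls G T Fo Fm n (n-p) f y"
    if c: "c \<in> Sig G T B Fo Fm p n" for c
  proof -
    obtain t where t: "t \<in> Sig_tot G T Fo p n" "c = E `` {t}" using c unfolding Sig_def E_def quotient_def by blast
    obtain A \<psi> x where tt: "t = (A,\<psi>,x)" by (cases t) auto
    have U: "\<psi> \<in> UHom G T (A+p) n" and x: "x \<in> Fo A" using t tt unfolding Sig_tot_def by auto
    have AP: "A + p \<le> n" using U unfolding UHom_iff by blast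
    define f where "f = urep \<psi>"
    have f: "f \<in> \<psi>" "f \<in> carrier (G n)" unfolding f_def using urep_U[OF U] by auto
    define y where "y = Fm A (n-p) (iota A (n-p)) x"
    have y: "y \<in> Fo (n-p)" unfolding y_def using F_cl[OF iota_U x] AP by simp
    have "(t, norm p n f y) \<in> E" unfolding E_def Sig_eq_def y_def tt using to_norm[OF t(1)[unfolded tt] f(1) p] by auto
    then have "c = E `` {norm p n f y}" unfolding t(2) E_def by (rule sig_img)
    moreover have "Phi p n c = bcls G T Fo Fm n (n-p) f y" unfolding t(2) E_def Phi_cls tt phi_def f_def y_def by simp
    ultimately show ?thesis using f y by blast
  qed
  show ?thesis unfolding bij_betw_def
  proof (intro conjI)
    show "inj_on (Phi p n) (Sig G T B Fo Fm p n)"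
    proof (rule inj_onI)
      fix c1 c2 assume c1: "c1 \<in> Sig G T B Fo Fm p n" and c2: "c2 \<in> Sig G T B Fo Fm p n" and eq: "Phi p n c1 = Phi p n c2"
      obtain f1 y1 where 1: "c1 = E `` {norm p n f1 y1}" "Phi p n c1 = bcls G T Fo Fm n (n-p) f1 y1" using cls[OF c1] by blast
      obtain f2 y2 where 2: "c2 = E `` {norm p n f2 y2}" "Phi p n c2 = bcls G T Fo Fm n (n-p) f2 y2" using cls[OF c2] by blast
      have m: "(f2,y2) \<in> bal_eq G T Fo Fm n (n-p) `` {(f2,y2)}" unfolding bal_eq_def by simp
      have "bal_eq G T Fo Fm n (n-p) `` {(f1,y1)} = bal_eq G T Fo Fm n (n-p) `` {(f2,y2)}"
        using eq 1(2) 2(2) unfolding bcls_def by simp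
      then have "(f2,y2) \<in> bal_eq G T Fo Fm n (n-p) `` {(f1,y1)}" using m by simp
      then have "((f1,y1),(f2,y2)) \<in> bal_eq G T Fo Fm n (n-p)" by simp
      from bal_eq_to_sig[OF this p] have "(norm p n f1 y1, norm p n f2 y2) \<in> E" unfolding normp_def E_def by simp
      then show "c1 = c2" unfolding 1 2 E_def by (rule sig_img)
    qed
    show "Phi p n ` Sig G T B Fo Fm p n = Bal G T Fo Fm n (n - p)"
    proof
      show "Phi p n ` Sig G T B Fo Fm p n \<subseteq> Bal G T Fo Fm n (n - p)"
      proof
        fix d assume "d \<in> Phi p n ` Sig G T B Fo Fm p n"
        then obtain c where c: "c \<in> Sig G T B Fo Fm p n" "d = Phi p n c" by blast
        obtain f y where "Phi p n c = bcls G T Fo Fm n (n-p) f y" "f \<in> carrier (G n)" "y \<in> Fo (n-p)" using cls[OF c(1)] by blast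
        then show "d \<in> Bal G T Fo Fm n (n - p)" unfolding c(2) Bal_def bcls_def by (auto intro: quotientI)
      qed
      show "Bal G T Fo Fm n (n - p) \<subseteq> Phi p n ` Sig G T B Fo Fm p n"
      proof
        fix d assume "d \<in> Bal G T Fo Fm n (n - p)"
        then obtain g x where gx: "g \<in> carrier (G n)" "x \<in> Fo (n-p)" "d = bcls G T Fo Fm n (n-p) g x"
          unfolding Bal_def bcls_def quotient_def by blast
        have "E `` {norm p n g x} \<in> Sig G T B Fo Fm p n" unfolding Sig_def E_def
          by (rule quotientI, rule norm_tot[OF p gx(1,2)])
        moreover have "Phi p n (E `` {norm p n g x}) = d" unfolding E_def Phi_cls phi_norm[OF p gx(1,2)] gx(3) ..
        ultimately show "d \<in> Phi p n ` Sig G T B Fo Fm p n" by blast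
      qed
    qed
  qed
qed

end


context bsgF begin

lemma hex_inv: "inv\<^bsub>G (M+A+r)\<^esub> (B (M+A) r) =
   L (M+A+r) (A+r) (inv\<^bsub>G (A+r)\<^esub> B A r) \<otimes>\<^bsub>G (M+A+r)\<^esub> R (M+A+r) (M+r) (inv\<^bsub>G (M+r)\<^esub> B M r)"
proof -
  interpret g: group "G (M+A+r)" by (rule grp)
  have e1: "M + A + r - (M + r) = A" "M + A + r - (A + r) = M" by simp_all
  have 1: "T (M+r) A (B M r) (e A) = R (M+A+r) (M+r) (B M r)" unfolding R_def e1 ..
  have 2: "T M (A+r) (e M) (B A r) = L (M+A+r) (A+r) (B A r)" unfolding L_def e1 ..
  have b1: "B M r \<in> carrier (G (M+r))" "B A r \<in> carrier (G (A+r))" using Bc by auto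
  have c1: "R (M+A+r) (M+r) (B M r) \<in> carrier (G (M+A+r))" using R_c b1 by simp
  have c2: "L (M+A+r) (A+r) (B A r) \<in> carrier (G (M+A+r))" using L_c b1 by simp
  have "B (M+A) r = R (M+A+r) (M+r) (B M r) \<otimes>\<^bsub>G (M+A+r)\<^esub> L (M+A+r) (A+r) (B A r)"
    using H2[of M A r] unfolding 1 2 .
  then have "inv\<^bsub>G (M+A+r)\<^esub> (B (M+A) r) = inv\<^bsub>G (M+A+r)\<^esub> L (M+A+r) (A+r) (B A r) \<otimes>\<^bsub>G (M+A+r)\<^esub> inv\<^bsub>G (M+A+r)\<^esub> R (M+A+r) (M+r) (B M r)"
    using c1 c2 by (simp add: g.inv_mult_group)
  also have "\<dots> = L (M+A+r) (A+r) (inv\<^bsub>G (A+r)\<^esub> B A r) \<otimes>\<^bsub>G (M+A+r)\<^esub> R (M+A+r) (M+r) (inv\<^bsub>G (M+r)\<^esub> B M r)"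
    using L_inv[OF b1(2), of "M+A+r"] R_inv[OF b1(1), of "M+A+r"] by simp
  finally show ?thesis .
qed

definition "Mf p q n h = (\<lambda>(g,x). bcls G T Fo Fm n (n-q) (g \<otimes>\<^bsub>G n\<^esub> L n p h)
     (Fm (n - p) (n - q) (utens G T B (n - p) (n - p) 0 (p - q) (uid G T (n - p)) (uiota G T (p - q))) x))"

lemma j_eq: assumes "q \<le> p" "p \<le> n"
  shows "utens G T B (n - p) (n - p) 0 (p - q) (uid G T (n - p)) (uiota G T (p - q))
     = inv\<^bsub>G (n-q)\<^esub> B (n-p) (p-q) <#\<^bsub>G (n-q)\<^esub> S (n-q) (n-q-(n-p))"
proof -
  have e: "n - p + (p - q) = n - q" "n - q - (n - p) = p - q" using assms by auto
  show ?thesis using Uc[of "n-p" "p-q"] unfolding e .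
qed

lemma M_step: assumes r: "(a, b) \<in> bal_rel G T Fo Fm n (n-p)" and pq: "q \<le> p" "p \<le> n" and h: "h \<in> carrier (G p)"
  shows "Mf p q n h a = Mf p q n h b"
proof -
  obtain g1 x1 where a: "a = (g1,x1)" by (cases a) auto
  obtain g2 x2 where b: "b = (g2,x2)" by (cases b) auto
  have "g2 \<in> carrier (G n)" "x1 \<in> Fo (n-p)" and "\<exists>s \<in> carrier (G (n-p)). g1 = g2 \<otimes>\<^bsub>G n\<^esub> (T (n-p) (n - (n-p)) s (e (n - (n-p)))) \<and>
            x2 = Fm (n-p) (n-p) (s <#\<^bsub>G (n-p)\<^esub> S (n-p) 0) x1"
    using r unfolding a b bal_rel_def by auto
  then obtain s where s: "g2 \<in> carrier (G n)" "x1 \<in> Fo (n-p)" "s \<in> carrier (G (n-p))"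
    "g1 = g2 \<otimes>\<^bsub>G n\<^esub> R n (n-p) s" "x2 = Fm (n-p) (n-p) (s <#\<^bsub>G (n-p)\<^esub> S (n-p) 0) x1"
    unfolding R_def by blast
  interpret g: group "G n" by (rule grp)
  define j where "j = utens G T B (n - p) (n - p) 0 (p - q) (uid G T (n - p)) (uiota G T (p - q))"
  define ib where "ib = inv\<^bsub>G (n-q)\<^esub> B (n-p) (p-q)"
  have eq: "n - p + (p - q) = n - q" "n - q - (n - q) = 0" "n - p - (n - p) = 0" using pq by auto
  have ibc: "ib \<in> carrier (G (n-q))" unfolding ib_def using Bc[of "n-p" "p-q"] group.inv_closed[OF grp] eq by simp
  have jq: "j = ib <#\<^bsub>G (n-q)\<^esub> S (n-q) (n-q-(n-p))" unfolding j_def ib_def by (rule j_eq[OF pq])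
  define s' where "s' = R (n-q) (n-p) s"
  have s'c: "s' \<in> carrier (G (n-q))" unfolding s'_def using R_c s pq by simp
  have Rs: "R n (n-p) s = R n (n-q) s'" unfolding s'_def using R_R s pq by simp
  have Lh: "L n p h \<in> carrier (G n)" using L_c h pq by simp
  have Rc: "R n (n-p) s \<in> carrier (G n)" using R_c s by simp
  have y1: "Fm (n-p) (n-q) j x1 \<in> Fo (n-q)" unfolding jq using F_cl[OF UHom_I[of "n-p" "n-q" ib] s(2)] ibc pq by simp
  have 1: "g1 \<otimes>\<^bsub>G n\<^esub> L n p h = (g2 \<otimes>\<^bsub>G n\<^esub> L n p h) \<otimes>\<^bsub>G n\<^esub> R n (n-q) s'"
  proof -
    have "g1 \<otimes>\<^bsub>G n\<^esub> L n p h = g2 \<otimes>\<^bsub>G n\<^esub> (R n (n-p) s \<otimes>\<^bsub>G n\<^esub> L n p h)" unfolding s(4) using s Lh Rc by (simp add: g.m_assoc)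
    also have "R n (n-p) s \<otimes>\<^bsub>G n\<^esub> L n p h = L n p h \<otimes>\<^bsub>G n\<^esub> R n (n-p) s" using LR_comm[of p "n-p" n h s] pq h s by simp
    finally show ?thesis unfolding Rs[symmetric] using s Lh Rc by (simp add: g.m_assoc)
  qed
  have nat: "s' \<otimes>\<^bsub>G (n-q)\<^esub> ib = ib \<otimes>\<^bsub>G (n-q)\<^esub> L (n-q) (n-p) s"
    unfolding s'_def ib_def using nat2[OF s(3), of "p-q", unfolded eq(1)] .
  have "Fm (n-q) (n-q) (s' <#\<^bsub>G (n-q)\<^esub> S (n-q) 0) (Fm (n-p) (n-q) j x1)
     = Fm (n-p) (n-q) ((s' \<otimes>\<^bsub>G (n-q)\<^esub> L (n-q) (n-q) ib) <#\<^bsub>G (n-q)\<^esub> S (n-q) (n-q-(n-p))) x1"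
    unfolding jq using F_comp_eq[of "n-q" "n-q" "n-p" s' ib x1] s'c ibc s pq eq by simp
  also have "\<dots> = Fm (n-p) (n-q) ((ib \<otimes>\<^bsub>G (n-q)\<^esub> L (n-q) (n-p) s) <#\<^bsub>G (n-q)\<^esub> S (n-q) (n-q-(n-p))) x1"
    using L_nn[OF ibc] nat by simp
  also have "\<dots> = Fm (n-p) (n-q) j (Fm (n-p) (n-p) (s <#\<^bsub>G (n-p)\<^esub> S (n-p) 0) x1)"
    unfolding jq using F_comp_eq[of "n-p" "n-q" "n-p" ib s x1] ibc s pq eq by simp
  finally have 2: "Fm (n-q) (n-q) (s' <#\<^bsub>G (n-q)\<^esub> S (n-q) 0) (Fm (n-p) (n-q) j x1) = Fm (n-p) (n-q) j x2"
    unfolding s(5) .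
  have g2L: "g2 \<otimes>\<^bsub>G n\<^esub> L n p h \<in> carrier (G n)" using s Lh by simp
  show ?thesis unfolding a b Mf_def j_def[symmetric] using 1 bal_step[OF g2L y1 s'c] 2 by simp
qed

lemma M_eq: assumes r: "(a, b) \<in> bal_eq G T Fo Fm n (n-p)" and pq: "q \<le> p" "p \<le> n" and h: "h \<in> carrier (G p)"
  shows "Mf p q n h a = Mf p q n h b"
  using r unfolding bal_eq_def
proof (induction rule: rtrancl_induct)
  case base then show ?case by simp
next
  case (step b c)
  then show ?case using M_step[OF _ pq h, of b c] M_step[OF _ pq h, of c b] by auto
qed

end


context bsgF begin

lemma natural:
  assumes pq: "q \<le> p" "p \<le> n" and eta: "\<eta> \<in> UHom G T q p" "h \<in> \<eta>"
    and g: "g \<in> carrier (G n)" and x: "x \<in> Fo (n - p)" and z: "z \<in> Sig G T B Fo Fm p n"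
    and Pz: "Phi p n z = bcls G T Fo Fm n (n - p) g x"
  shows "Phi q n (Sig_map G T B Fo Fm q p \<eta> n z) =
          bcls G T Fo Fm n (n - q)
            (g \<otimes>\<^bsub>G n\<^esub> (T (n - p) p (e (n - p)) h))
            (Fm (n - p) (n - q) (utens G T B (n - p) (n - p) 0 (p - q) (uid G T (n - p)) (uiota G T (p - q))) x)"
proof -
  obtain h0 where h0: "h0 \<in> carrier (G p)" "\<eta> = h0 <#\<^bsub>G p\<^esub> S p (p-q)" using eta(1) unfolding UHom_iff by blast
  have Hp: "subgroup (S p (p-q)) (G p)" by (rule S_sub, simp)
  have hc: "h \<in> carrier (G p)" using cos_c[OF Hp h0(1)] eta(2) h0(2) by simp
  have etah: "\<eta> = h <#\<^bsub>G p\<^esub> S p (p-q)" using cos_mem[OF Hp h0(1)] eta(2) h0(2) by simp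
  obtain t0 where t0: "t0 \<in> Sig_tot G T Fo p n" "z = Sig_eq G T B Fo Fm p n `` {t0}"
    using z unfolding Sig_def quotient_def by blast
  define t where "t = (SOME t. t \<in> z)"
  have "t0 \<in> z" unfolding t0(2) Sig_eq_def by simp
  then have tz: "t \<in> z" unfolding t_def by (rule someI)
  have tS: "t \<in> Sig_tot G T Fo p n" using Sig_eq_tot[OF _ t0(1)] tz unfolding t0(2) by simp
  obtain A \<psi> x0 where tt: "t = (A,\<psi>,x0)" by (cases t) auto
  have U: "\<psi> \<in> UHom G T (A+p) n" and x0: "x0 \<in> Fo A" using tS tt unfolding Sig_tot_def by auto
  have AP: "A + p \<le> n" using U unfolding UHom_iff by blast
  define f where "f = urep \<psi>"
  have f: "f \<in> \<psi>" "f \<in> carrier (G n)" unfolding f_def using urep_U[OF U] by auto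
  have HA: "subgroup (S n (n-(A+p))) (G n)" by (rule S_sub, simp)
  have psi: "\<psi> = f <#\<^bsub>G n\<^esub> S n (n-(A+p))"
  proof -
    obtain f0 where "f0 \<in> carrier (G n)" "\<psi> = f0 <#\<^bsub>G n\<^esub> S n (n-(A+p))" using U unfolding UHom_iff by blast
    then show ?thesis using cos_mem[OF HA] f(1) by simp
  qed
  define y0 where "y0 = Fm A (n-p) (iota A (n-p)) x0"
  have y0: "y0 \<in> Fo (n-p)" unfolding y0_def using F_cl[OF iota_U x0] AP by simp
  have "Phi p n z = bcls G T Fo Fm n (n-p) f y0" unfolding Phi_def t_def[symmetric] tt phi_def f_def y0_def by simp
  then have E1: "bal_eq G T Fo Fm n (n-p) `` {(f,y0)} = bal_eq G T Fo Fm n (n-p) `` {(g,x)}" using Pz unfolding bcls_def by simp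
  have "(g,x) \<in> bal_eq G T Fo Fm n (n-p) `` {(f,y0)}" unfolding E1 unfolding bal_eq_def by simp
  then have "((f,y0),(g,x)) \<in> bal_eq G T Fo Fm n (n-p)" by simp
  from M_eq[OF this pq hc] have ME: "Mf p q n h (f,y0) = Mf p q n h (g,x)" .
    define ibA where "ibA = inv\<^bsub>G (A+(p-q))\<^esub> B A (p-q)"
  have ibAc: "ibA \<in> carrier (G (A+(p-q)))" unfolding ibA_def using Bc group.inv_closed[OF grp] by simp
  define Z where "Z = L (A+p) p h \<otimes>\<^bsub>G (A+p)\<^esub> R (A+p) (A+(p-q)) ibA"
  have Lh1: "L (A+p) p h \<in> carrier (G (A+p))" using L_c hc by simp
  have R1: "R (A+p) (A+(p-q)) ibA \<in> carrier (G (A+p))" using R_c ibAc by simp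
  have Zc: "Z \<in> carrier (G (A+p))" unfolding Z_def using Lh1 R1 monoid.m_closed[OF group.is_monoid[OF grp]] by blast
  have ut: "utens G T B A A q p (uid G T A) \<eta> = Z <#\<^bsub>G (A+p)\<^esub> S (A+p) (A+p-(A+q))"
    unfolding etah Z_def ibA_def using Ub[OF pq(1) hc, of A] by simp
  define k where "k = L (n-q) (A+(p-q)) ibA"
  have kc: "k \<in> carrier (G (n-q))" unfolding k_def using L_c ibAc AP pq by simp
  have eq4: "n - (A+p) + (A+(p-q)) = n - q" using AP pq by simp
  have LZ: "L n (A+p) Z = L n p h \<otimes>\<^bsub>G n\<^esub> R n (n-q) k"
  proof -
    have "L n (A+p) Z = L n (A+p) (L (A+p) p h) \<otimes>\<^bsub>G n\<^esub> L n (A+p) (R (A+p) (A+(p-q)) ibA)"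
      unfolding Z_def using L_m Lh1 R1 AP by simp
    also have "L n (A+p) (L (A+p) p h) = L n p h" using L_L hc AP by simp
    also have "L n (A+p) (R (A+p) (A+(p-q)) ibA) = R n (n-q) k"
      unfolding k_def using L_R[of "A+(p-q)" "A+p" n ibA] ibAc AP eq4 by simp
    finally show ?thesis .
  qed
  have Lh: "L n p h \<in> carrier (G n)" using L_c hc pq by simp
  have Rk: "R n (n-q) k \<in> carrier (G n)" using R_c kc by simp
  define f' where "f' = (f \<otimes>\<^bsub>G n\<^esub> L n p h) \<otimes>\<^bsub>G n\<^esub> R n (n-q) k"
  have fLc: "f \<otimes>\<^bsub>G n\<^esub> L n p h \<in> carrier (G n)" using f Lh monoid.m_closed[OF group.is_monoid[OF grp]] by blast
  have f'c: "f' \<in> carrier (G n)" unfolding f'_def using fLc Rk monoid.m_closed[OF group.is_monoid[OF grp]] by blast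
  define \<psi>2 where "\<psi>2 = ucomp G T n (A + p) (A + q) \<psi> (utens G T B A A q p (uid G T A) \<eta>)"
  have psi2: "\<psi>2 = f' <#\<^bsub>G n\<^esub> S n (n-(A+q))"
  proof -
    have "\<psi>2 = (f \<otimes>\<^bsub>G n\<^esub> L n (A+p) Z) <#\<^bsub>G n\<^esub> S n (n-(A+q))"
      unfolding \<psi>2_def ut psi using ucomp_eq[of "A+p" n "A+q" f Z] AP pq f Zc by simp
    also have "f \<otimes>\<^bsub>G n\<^esub> L n (A+p) Z = f'" unfolding LZ f'_def using f Lh Rk
      by (simp add: monoid.m_assoc[OF group.is_monoid[OF grp]])
    finally show ?thesis .
  qed
  have t'S: "(A, \<psi>2, x0) \<in> Sig_tot G T Fo q n"
    unfolding Sig_tot_def using UHom_I[of "A+q" n f'] AP pq f'c x0 psi2 by simp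
  have f'in: "f' \<in> \<psi>2" unfolding psi2 by (rule cos_self[OF S_sub], simp, rule f'c)
  have SM: "Sig_map G T B Fo Fm q p \<eta> n z = Sig_eq G T B Fo Fm q n `` {(A, \<psi>2, x0)}"
    unfolding Sig_map_def t_def[symmetric] tt \<psi>2_def by simp
  have y1: "Fm A (n-q) (iota A (n-q)) x0 \<in> Fo (n-q)" using F_cl[OF iota_U x0] AP pq by simp
  have P1: "Phi q n (Sig_map G T B Fo Fm q p \<eta> n z) =
      bcls G T Fo Fm n (n-q) (f \<otimes>\<^bsub>G n\<^esub> L n p h) (Fm (n-q) (n-q) (k <#\<^bsub>G (n-q)\<^esub> S (n-q) 0) (Fm A (n-q) (iota A (n-q)) x0))"
    unfolding SM Phi_cls phi_any[OF t'S f'in] f'_def using bal_step[OF fLc y1 kc] .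
    define j where "j = utens G T B (n - p) (n - p) 0 (p - q) (uid G T (n - p)) (uiota G T (p - q))"
  define ib where "ib = inv\<^bsub>G (n-q)\<^esub> B (n-p) (p-q)"
  have eqs: "n - p + (p - q) = n - q" "n - q - (n - q) = 0" "n - p - A + A = n - p" "n - p - A + (p - q) = n - q - A"
     "n - p - (n - p) = 0" using pq AP by auto
  have ibc: "ib \<in> carrier (G (n-q))" unfolding ib_def using Bc[of "n-p" "p-q"] group.inv_closed[OF grp] eqs by simp
  have jq: "j = ib <#\<^bsub>G (n-q)\<^esub> S (n-q) (n-q-(n-p))" unfolding j_def ib_def by (rule j_eq[OF pq])
  define w where "w = inv\<^bsub>G (n-q-A)\<^esub> B (n-p-A) (p-q)"
  have wc: "w \<in> carrier (G (n-q-A))" unfolding w_def using Bc[of "n-p-A" "p-q"] group.inv_closed[OF grp] eqs by simp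
  have hx: "ib = k \<otimes>\<^bsub>G (n-q)\<^esub> R (n-q) (n-q-A) w"
    unfolding ib_def k_def w_def ibA_def using hex_inv[of "n-p-A" A "p-q", unfolded eqs] .
  have HQ: "subgroup (S (n-q) (n-q-A)) (G (n-q))" by (rule S_sub, simp)
  have ibk: "ib <#\<^bsub>G (n-q)\<^esub> S (n-q) (n-q-A) = k <#\<^bsub>G (n-q)\<^esub> S (n-q) (n-q-A)"
    unfolding hx by (rule cos_abs[OF HQ kc S_mem[OF wc]])
  have "Fm (n-q) (n-q) (k <#\<^bsub>G (n-q)\<^esub> S (n-q) 0) (Fm A (n-q) (iota A (n-q)) x0)
      = Fm A (n-q) ((k \<otimes>\<^bsub>G (n-q)\<^esub> L (n-q) (n-q) (e (n-q))) <#\<^bsub>G (n-q)\<^esub> S (n-q) (n-q-A)) x0"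
    using F_comp_eq[of "n-q" "n-q" A k "e (n-q)" x0] kc ec AP pq x0 eqs unfolding iota_def by simp
  also have "\<dots> = Fm A (n-q) (k <#\<^bsub>G (n-q)\<^esub> S (n-q) (n-q-A)) x0" using kc L_nn ec
    by (simp add: monoid.r_one[OF group.is_monoid[OF grp]])
  also have "\<dots> = Fm A (n-q) ((ib \<otimes>\<^bsub>G (n-q)\<^esub> L (n-q) (n-p) (e (n-p))) <#\<^bsub>G (n-q)\<^esub> S (n-q) (n-q-A)) x0"
    using ibc L_e[of "n-p" "n-q"] pq ibk by (simp add: monoid.r_one[OF group.is_monoid[OF grp]])
  also have "\<dots> = Fm (n-p) (n-q) j y0"
    unfolding jq y0_def iota_def using F_comp_eq[of "n-p" "n-q" A ib "e (n-p)" x0] ibc ec AP pq x0 by simp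
  finally have K: "Fm (n-q) (n-q) (k <#\<^bsub>G (n-q)\<^esub> S (n-q) 0) (Fm A (n-q) (iota A (n-q)) x0) = Fm (n-p) (n-q) j y0" .
  have "Phi q n (Sig_map G T B Fo Fm q p \<eta> n z) = Mf p q n h (f,y0)"
    unfolding P1 K Mf_def j_def by simp
  also have "\<dots> = Mf p q n h (g,x)" by (rule ME)
  finally show ?thesis unfolding Mf_def L_def by simp
qed

end


theorem proposition4p2:
  fixes G :: "nat \<Rightarrow> 'g monoid" and T :: "nat \<Rightarrow> nat \<Rightarrow> 'g \<Rightarrow> 'g \<Rightarrow> 'g" and B :: "nat \<Rightarrow> nat \<Rightarrow> 'g"
    and Fo :: "nat \<Rightarrow> 'x set" and Fm :: "nat \<Rightarrow> nat \<Rightarrow> 'g set \<Rightarrow> 'x \<Rightarrow> 'x"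
  assumes "braided_stability_groupoid G T B"
    and "UG_functor G T Fo Fm"
  shows "\<exists>\<Phi> :: nat \<Rightarrow> nat \<Rightarrow> (nat \<times> 'g set \<times> 'x) set \<Rightarrow> ('g \<times> 'x) set.
     (\<forall>p n. p \<le> n \<longrightarrow> bij_betw (\<Phi> p n) (Sig G T B Fo Fm p n) (Bal G T Fo Fm n (n - p))) \<and>
     (\<forall>p q n \<eta> h g x z. q \<le> p \<longrightarrow> p \<le> n \<longrightarrow> \<eta> \<in> UHom G T q p \<longrightarrow> h \<in> \<eta> \<longrightarrow>
        g \<in> carrier (G n) \<longrightarrow> x \<in> Fo (n - p) \<longrightarrow> z \<in> Sig G T B Fo Fm p n \<longrightarrow>
        \<Phi> p n z = bcls G T Fo Fm n (n - p) g x \<longrightarrow>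
        \<Phi> q n (Sig_map G T B Fo Fm q p \<eta> n z) =
          bcls G T Fo Fm n (n - q)
            (mult (G n) g (T (n - p) p (one (G (n - p))) h))
            (Fm (n - p) (n - q) (utens G T B (n - p) (n - p) 0 (p - q) (uid G T (n - p)) (uiota G T (p - q))) x))"
proof -
  interpret I: bsgF G T B Fo Fm by unfold_locales (rule assms(1), rule assms(2))
  have 1: "\<forall>p n. p \<le> n \<longrightarrow> bij_betw (I.Phi p n) (Sig G T B Fo Fm p n) (Bal G T Fo Fm n (n - p))"
    using I.Phi_bij by blast
  have 2: "\<forall>p q n \<eta> h g x z. q \<le> p \<longrightarrow> p \<le> n \<longrightarrow> \<eta> \<in> UHom G T q p \<longrightarrow> h \<in> \<eta> \<longrightarrow>
        g \<in> carrier (G n) \<longrightarrow> x \<in> Fo (n - p) \<longrightarrow> z \<in> Sig G T B Fo Fm p n \<longrightarrow>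
        I.Phi p n z = bcls G T Fo Fm n (n - p) g x \<longrightarrow>
        I.Phi q n (Sig_map G T B Fo Fm q p \<eta> n z) =
          bcls G T Fo Fm n (n - q)
            (mult (G n) g (T (n - p) p (one (G (n - p))) h))
            (Fm (n - p) (n - q) (utens G T B (n - p) (n - p) 0 (p - q) (uid G T (n - p)) (uiota G T (p - q))) x)"
    by (intro allI impI, rule I.natural) assumption+
  show ?thesis using 1 2 by (intro exI[of _ I.Phi]) blast
qed

end
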